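(* Let $\mathcal N$ be a null structure on an oriented three-dimensional (pseudo-)Riemannian manifold $(\mathcal M,g)$ and $k^a$ any generator of $\mathcal N$. (1) If $\mathcal N$ is co-geodetic, then $\mathcal N$ is principal: $k^ak^b\Phi_{ab}=0$. (2) If $\mathcal N$ is parallel, then $\Phi_{ab}$ is algebraically special with $\mathcal N$ multiple principal: $k^c\Phi_{c[a}k_{b]}=0$.
   Context: Abstract index notation; $\nabla$ the Levi-Civita connection; brackets denote (skew-)symmetrisation with weight $1/2$. $R_{abd}{}^cV^d=2\nabla_{[a}\nabla_{b]}V^c$, $R_{ab}=R_{acb}{}^c$, $R=R_a{}^a$, $\Phi_{ab}=R_{ab}-\frac13Rg_{ab}$. $g,\nabla$ extended complex-(bi)linearly to $T^{\mathbb C}\mathcal M$. A null structure is a complex line subbundle $\mathcal N\subset T^{\mathbb C}\mathcal M$ with $g(k,k)=0$ for all sections; a generator is a nowhere-vanishing section; $\mathcal N^\perp$ its orthogonal complement. $\mathcal N$ is co-geodetic if $g(\nabla_XY,Z)=0$ for all sections $X,Y$ of $\mathcal N^\perp$, $Z$ of $\mathcal N$; $\mathcal N$ is parallel if $\nabla_YX\in\Gamma(\mathcal N)$ for all $X\in\Gamma(\mathcal N)$ and all vector fields $Y$. *)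

theory Defs
  imports "HOL-Analysis.Analysis"
begin

text \<open>Local coordinate model: the manifold is an open set U of R^3 (coordinates x^1,x^2,x^3,
  index type 3), the metric is a smooth field of symmetric nondegenerate 3x3 real matrices.
  Index conventions: g x $ a $ b = g_ab, Chr g x c a b = Chr^c_ab,
  Riem g x a b d c = R_abd^c.\<close>

type_synonym pt = "real^3"

definition pd :: "3 \<Rightarrow> (pt \<Rightarrow> 'b::real_normed_vector) \<Rightarrow> pt \<Rightarrow> 'b" where
  "pd i f x = frechet_derivative f (at x) (axis i 1)"

fun Ck_on :: "nat \<Rightarrow> pt set \<Rightarrow> (pt \<Rightarrow> 'b::real_normed_vector) \<Rightarrow> bool" where
  "Ck_on 0 U f = continuous_on U f"
| "Ck_on (Suc n) U f = (f differentiable_on U \<and> (\<forall>i. Ck_on n U (pd i f)))"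

definition smooth_on :: "pt set \<Rightarrow> (pt \<Rightarrow> 'b::real_normed_vector) \<Rightarrow> bool" where
  "smooth_on U f = (\<forall>n. Ck_on n U f)"

definition pr_metric :: "pt set \<Rightarrow> (pt \<Rightarrow> real^3^3) \<Rightarrow> bool" where
  "pr_metric U g = (open U \<and> smooth_on U g \<and>
     (\<forall>x\<in>U. transpose (g x) = g x \<and> det (g x) \<noteq> 0))"

definition ginv :: "(pt \<Rightarrow> real^3^3) \<Rightarrow> pt \<Rightarrow> real^3^3" where
  "ginv g x = matrix_inv (g x)"

definition Chr :: "(pt \<Rightarrow> real^3^3) \<Rightarrow> pt \<Rightarrow> 3 \<Rightarrow> 3 \<Rightarrow> 3 \<Rightarrow> real" where
  "Chr g x c a b = (\<Sum>d\<in>UNIV. ginv g x $ c $ d *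
      (pd a (\<lambda>y. g y $ d $ b) x + pd b (\<lambda>y. g y $ d $ a) x - pd d (\<lambda>y. g y $ a $ b) x)) / 2"

text \<open>Riemann tensor R_abd^c with R_abd^c V^d = 2 nabla_[a nabla_b] V^c.\<close>
definition Riem :: "(pt \<Rightarrow> real^3^3) \<Rightarrow> pt \<Rightarrow> 3 \<Rightarrow> 3 \<Rightarrow> 3 \<Rightarrow> 3 \<Rightarrow> real" where
  "Riem g x a b d c =
     pd a (\<lambda>y. Chr g y c b d) x - pd b (\<lambda>y. Chr g y c a d) x
     + (\<Sum>e\<in>UNIV. Chr g x c a e * Chr g x e b d - Chr g x c b e * Chr g x e a d)"

definition Ric :: "(pt \<Rightarrow> real^3^3) \<Rightarrow> pt \<Rightarrow> 3 \<Rightarrow> 3 \<Rightarrow> real" where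
  "Ric g x a b = (\<Sum>c\<in>UNIV. Riem g x a c b c)"

definition scal :: "(pt \<Rightarrow> real^3^3) \<Rightarrow> pt \<Rightarrow> real" where
  "scal g x = (\<Sum>a\<in>UNIV. \<Sum>b\<in>UNIV. ginv g x $ a $ b * Ric g x a b)"

definition Phi :: "(pt \<Rightarrow> real^3^3) \<Rightarrow> pt \<Rightarrow> 3 \<Rightarrow> 3 \<Rightarrow> real" where
  "Phi g x a b = Ric g x a b - scal g x * g x $ a $ b / 3"

definition gC :: "(pt \<Rightarrow> real^3^3) \<Rightarrow> pt \<Rightarrow> complex^3 \<Rightarrow> complex^3 \<Rightarrow> complex" where
  "gC g x u v = (\<Sum>a\<in>UNIV. \<Sum>b\<in>UNIV. of_real (g x $ a $ b) * u $ a * v $ b)"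

definition covD :: "(pt \<Rightarrow> real^3^3) \<Rightarrow> (pt \<Rightarrow> complex^3) \<Rightarrow> (pt \<Rightarrow> complex^3) \<Rightarrow> pt \<Rightarrow> complex^3" where
  "covD g X Y x = (\<chi> c. \<Sum>a\<in>UNIV. X x $ a *
      (pd a (\<lambda>y. Y y $ c) x + (\<Sum>b\<in>UNIV. of_real (Chr g x c a b) * Y x $ b)))"

definition complexify :: "(pt \<Rightarrow> real^3) \<Rightarrow> pt \<Rightarrow> complex^3" where
  "complexify Y x = (\<chi> a. of_real (Y x $ a))"

text \<open>A null structure N on U given by a generator k: a smooth nowhere-vanishing complex
  vector field with g(k,k)=0; N_x = span_C {k x}.\<close>
definition null_generator :: "pt set \<Rightarrow> (pt \<Rightarrow> real^3^3) \<Rightarrow> (pt \<Rightarrow> complex^3) \<Rightarrow> bool" where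
  "null_generator U g k = (smooth_on U k \<and> (\<forall>x\<in>U. k x \<noteq> 0 \<and> gC g x (k x) (k x) = 0))"

definition sec_N :: "pt set \<Rightarrow> (pt \<Rightarrow> complex^3) \<Rightarrow> (pt \<Rightarrow> complex^3) \<Rightarrow> bool" where
  "sec_N U k Z = (smooth_on U Z \<and> (\<forall>x\<in>U. \<exists>c::complex. Z x = c *s k x))"

definition sec_Nperp :: "pt set \<Rightarrow> (pt \<Rightarrow> real^3^3) \<Rightarrow> (pt \<Rightarrow> complex^3) \<Rightarrow> (pt \<Rightarrow> complex^3) \<Rightarrow> bool" where
  "sec_Nperp U g k X = (smooth_on U X \<and> (\<forall>x\<in>U. gC g x (X x) (k x) = 0))"

definition co_geodetic :: "pt set \<Rightarrow> (pt \<Rightarrow> real^3^3) \<Rightarrow> (pt \<Rightarrow> complex^3) \<Rightarrow> bool" where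
  "co_geodetic U g k = (\<forall>X Y Z. sec_Nperp U g k X \<longrightarrow> sec_Nperp U g k Y \<longrightarrow> sec_N U k Z \<longrightarrow>
      (\<forall>x\<in>U. gC g x (covD g X Y x) (Z x) = 0))"

definition parallel_ns :: "pt set \<Rightarrow> (pt \<Rightarrow> real^3^3) \<Rightarrow> (pt \<Rightarrow> complex^3) \<Rightarrow> bool" where
  "parallel_ns U g k = (\<forall>X Y. sec_N U k X \<longrightarrow> smooth_on U Y \<longrightarrow>
      (\<forall>x\<in>U. \<exists>c::complex. covD g (complexify Y) X x = c *s k x))"

text \<open>k^a k^b Phi_ab, and k^c Phi_c[a k_b] (up to the factor 1/2).\<close>
definition PhiC :: "(pt \<Rightarrow> real^3^3) \<Rightarrow> pt \<Rightarrow> 3 \<Rightarrow> 3 \<Rightarrow> complex" where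
  "PhiC g x a b = of_real (Phi g x a b)"

definition lower :: "(pt \<Rightarrow> real^3^3) \<Rightarrow> pt \<Rightarrow> complex^3 \<Rightarrow> 3 \<Rightarrow> complex" where
  "lower g x v b = (\<Sum>d\<in>UNIV. of_real (g x $ b $ d) * v $ d)"

end

theory Submission
  imports Defs
begin

lemma pd_has: "(f has_derivative f') (at x) \<Longrightarrow> pd i f x = f' (axis i 1)"
  unfolding pd_def using frechet_derivative_at by metis

lemma hasderiv_cong:
  assumes "open U" "x \<in> U" "\<And>y. y \<in> U \<Longrightarrow> f y = h y"
  shows "(f has_derivative D) (at x) = (h has_derivative D) (at x)"
  using has_derivative_transform_within_open[OF _ assms(1,2), of f D UNIV h]
        has_derivative_transform_within_open[OF _ assms(1,2), of h D UNIV f] assms(3)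
  by auto

lemma pd_cong:
  assumes "open U" "x \<in> U" "\<And>y. y \<in> U \<Longrightarrow> f y = h y"
  shows "pd i f x = pd i h x"
proof -
  have "frechet_derivative f (at x) = frechet_derivative h (at x)"
    unfolding frechet_derivative_def using hasderiv_cong[OF assms] by simp
  thus ?thesis unfolding pd_def by simp
qed

lemma diff_cong:
  fixes f h :: "'a::real_normed_vector \<Rightarrow> 'b::real_normed_vector"
  assumes "open U" "x \<in> U" "\<And>y. y \<in> U \<Longrightarrow> f y = h y" "f differentiable at x"
  shows "h differentiable at x"
proof -
  obtain D where "(f has_derivative D) (at x)" using assms(4) unfolding differentiable_def by blast
  then have "(h has_derivative D) (at x)" using hasderiv_cong[OF assms(1-3), where D=D] by simp
  then show ?thesis unfolding differentiable_def by blast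
qed

lemma Ck_on_cong:
  assumes "open U" "\<And>y. y \<in> U \<Longrightarrow> f y = h y" "Ck_on n U f"
  shows "Ck_on n U h"
  using assms(2,3)
proof (induction n arbitrary: f h)
  case 0
  then show ?case using continuous_on_cong by (metis Ck_on.simps(1))
next
  case (Suc n)
  have fdU: "f differentiable_on U" using Suc.prems(2) by simp
  have d: "h differentiable_on U"
  proof (subst differentiable_on_eq_differentiable_at[OF assms(1)], intro ballI)
    fix y assume y: "y \<in> U"
    then have "f differentiable at y" using fdU differentiable_on_eq_differentiable_at[OF assms(1)] by blast
    then show "h differentiable at y" using diff_cong[of U y f h] assms(1) y Suc.prems(1) by blast
  qed
  have "Ck_on n U (pd i h)" for i
  proof -
    have "Ck_on n U (pd i f)" using Suc.prems by simp
    moreover have "\<And>y. y \<in> U \<Longrightarrow> pd i f y = pd i h y"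
      using pd_cong[OF assms(1)] Suc.prems(1) by blast
    ultimately show ?thesis using Suc.IH by blast
  qed
  then show ?case using d by simp
qed

lemma Ck_on_mono: "Ck_on (Suc n) U f \<Longrightarrow> Ck_on n U f"
proof (induction n arbitrary: f)
  case 0
  then show ?case by (simp add: differentiable_imp_continuous_on)
next
  case (Suc n)
  have "f differentiable_on U" "\<forall>i. Ck_on (Suc n) U (pd i f)" using Suc.prems by simp_all
  moreover have "\<forall>i. Ck_on n U (pd i f)" using Suc.IH calculation(2) by blast
  ultimately show ?case by simp
qed

lemma Ck_on_le: "m \<le> n \<Longrightarrow> Ck_on n U f \<Longrightarrow> Ck_on m U f"
proof (induction n)
  case 0 then show ?case by simp
next
  case (Suc n)
  show ?case
  proof (cases "m = Suc n")
    case True then show ?thesis using Suc by simp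
  next
    case False then have "m \<le> n" using Suc.prems(1) by simp
    moreover have "Ck_on n U f" using Suc.prems(2) by (rule Ck_on_mono)
    ultimately show ?thesis using Suc.IH by blast
  qed
qed
  
lemma smooth_Ck: "smooth_on U f \<Longrightarrow> Ck_on n U f"
  unfolding smooth_on_def by blast

lemma Ck_on_const: "Ck_on n U (\<lambda>y. c)"
proof (induction n arbitrary: c)
  case 0 then show ?case by simp
next
  case (Suc n)
  have "pd i (\<lambda>y. c) = (\<lambda>y. 0)" for i
    by (rule ext, subst pd_has[of _ "\<lambda>_. 0"]) (auto intro: derivative_eq_intros)
  then show ?case using Suc by simp
qed

lemma Ck_on_linear:
  assumes "open U" "bounded_linear L" "Ck_on n U f"
  shows "Ck_on n U (\<lambda>y. L (f y))"
  using assms(3)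
proof (induction n arbitrary: f)
  case 0
  then show ?case using bounded_linear.continuous_on[OF assms(2)] by simp
next
  case (Suc n)
  have fd: "\<And>y. y \<in> U \<Longrightarrow> f differentiable at y"
    using Suc.prems differentiable_on_eq_differentiable_at[OF assms(1)] by auto
  have hd: "((\<lambda>y. L (f y)) has_derivative (\<lambda>h. L (frechet_derivative f (at y) h))) (at y)" if "y \<in> U" for y
  proof -
    have 1: "(f has_derivative frechet_derivative f (at y)) (at y)"
      using fd that frechet_derivative_works by blast+
    show ?thesis using bounded_linear.has_derivative[OF assms(2) 1] by simp
  qed
  have "(\<lambda>y. L (f y)) differentiable_on U"
    using hd differentiable_on_eq_differentiable_at[OF assms(1)] differentiable_def by blast
  moreover have "Ck_on n U (pd i (\<lambda>y. L (f y)))" for i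
  proof -
    have A: "Ck_on n U (\<lambda>y. L (pd i f y))" using Suc by simp
    have B: "L (pd i f y) = pd i (\<lambda>y. L (f y)) y" if "y \<in> U" for y
      using pd_has[OF hd[OF that]] unfolding pd_def by simp
    show ?thesis by (rule Ck_on_cong[OF assms(1) B A])
  qed
  ultimately show ?case by simp
qed

lemma Ck_on_add:
  assumes "open U" "Ck_on n U f" "Ck_on n U h"
  shows "Ck_on n U (\<lambda>y. f y + h y)"
  using assms(2,3)
proof (induction n arbitrary: f h)
  case 0
  then show ?case by (simp add: continuous_on_add)
next
  case (Suc n)
  have fd: "\<And>y. y \<in> U \<Longrightarrow> f differentiable at y" "\<And>y. y \<in> U \<Longrightarrow> h differentiable at y"
    using Suc.prems differentiable_on_eq_differentiable_at[OF assms(1)] by auto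
  have hd: "((\<lambda>y. f y + h y) has_derivative
     (\<lambda>v. frechet_derivative f (at y) v + frechet_derivative h (at y) v)) (at y)" if "y \<in> U" for y
  proof -
    have 1: "(f has_derivative frechet_derivative f (at y)) (at y)"
      and 2: "(h has_derivative frechet_derivative h (at y)) (at y)"
      using fd that frechet_derivative_works by blast+
    show ?thesis using has_derivative_add[OF 1 2] by simp
  qed
  have "(\<lambda>y. f y + h y) differentiable_on U"
    using hd differentiable_on_eq_differentiable_at[OF assms(1)] differentiable_def by blast
  moreover have "Ck_on n U (pd i (\<lambda>y. f y + h y))" for i
  proof -
    have A: "Ck_on n U (\<lambda>y. pd i f y + pd i h y)" using Suc by simp
    have B: "pd i f y + pd i h y = pd i (\<lambda>y. f y + h y) y" if "y \<in> U" for y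
      using pd_has[OF hd[OF that]] unfolding pd_def by simp
    show ?thesis by (rule Ck_on_cong[OF assms(1) B A])
  qed
  ultimately show ?case by simp
qed

lemma Ck_on_bilinear:
  assumes "open U" "bounded_bilinear P" "Ck_on n U f" "Ck_on n U h"
  shows "Ck_on n U (\<lambda>y. P (f y) (h y))"
  using assms(3,4)
proof (induction n arbitrary: f h)
  case 0
  then show ?case using bounded_bilinear.continuous_on[OF assms(2)] by simp
next
  case (Suc n)
  have fd: "\<And>y. y \<in> U \<Longrightarrow> f differentiable at y" "\<And>y. y \<in> U \<Longrightarrow> h differentiable at y"
    using Suc.prems differentiable_on_eq_differentiable_at[OF assms(1)] by auto
  have hd: "((\<lambda>y. P (f y) (h y)) has_derivative
     (\<lambda>v. P (f y) (frechet_derivative h (at y) v) + P (frechet_derivative f (at y) v) (h y))) (at y)" if "y \<in> U" for y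
  proof -
    have 1: "(f has_derivative frechet_derivative f (at y)) (at y)"
      and 2: "(h has_derivative frechet_derivative h (at y)) (at y)"
      using fd that frechet_derivative_works by blast+
    show ?thesis using bounded_bilinear.FDERIV[OF assms(2) 1 2] by simp
  qed
  have "(\<lambda>y. P (f y) (h y)) differentiable_on U"
    using hd differentiable_on_eq_differentiable_at[OF assms(1)] differentiable_def by blast
  moreover have "Ck_on n U (pd i (\<lambda>y. P (f y) (h y)))" for i
  proof -
    have "Ck_on n U f" "Ck_on n U h" using Suc.prems Ck_on_mono by blast+
    then have A: "Ck_on n U (\<lambda>y. P (f y) (pd i h y) + P (pd i f y) (h y))"
      using Suc by (intro Ck_on_add[OF assms(1)]) auto
    have B: "P (f y) (pd i h y) + P (pd i f y) (h y) = pd i (\<lambda>y. P (f y) (h y)) y" if "y \<in> U" for y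
      using pd_has[OF hd[OF that]] unfolding pd_def by simp
    show ?thesis by (rule Ck_on_cong[OF assms(1) B A])
  qed
  ultimately show ?case by simp
qed

lemma Ck_on_sum:
  assumes "open U" "finite A" "\<And>a. a \<in> A \<Longrightarrow> Ck_on n U (F a)"
  shows "Ck_on n U (\<lambda>y. \<Sum>a\<in>A. F a y)"
  using assms(2,3)
proof (induction A rule: finite_induct)
  case empty
  then show ?case using Ck_on_const by simp
next
  case (insert a A)
  have "Ck_on n U (F a)" using insert.prems by simp
  moreover have "Ck_on n U (\<lambda>y. \<Sum>a\<in>A. F a y)" using insert by simp
  ultimately have "Ck_on n U (\<lambda>y. F a y + (\<Sum>a\<in>A. F a y))" using Ck_on_add[OF assms(1)] by blast
  then show ?case using insert.hyps by simp
qed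

lemma dir_deriv:
  fixes f :: "pt \<Rightarrow> real"
  assumes "f differentiable at (p + t *\<^sub>R w)"
  shows "((\<lambda>s. f (p + s *\<^sub>R w)) has_real_derivative frechet_derivative f (at (p + t *\<^sub>R w)) w) (at t)"
proof -
  let ?D = "frechet_derivative f (at (p + t *\<^sub>R w))"
  have 1: "((\<lambda>s. p + s *\<^sub>R w) has_derivative (\<lambda>s. s *\<^sub>R w)) (at t)"
    by (auto intro!: derivative_eq_intros)
  have 2: "(f has_derivative ?D) (at (p + t *\<^sub>R w))"
    using assms frechet_derivative_works by blast
  have 3: "((\<lambda>s. f (p + s *\<^sub>R w)) has_derivative (\<lambda>s. ?D (s *\<^sub>R w))) (at t)"
    using has_derivative_compose[OF 1 2] by simp
  have lin: "linear ?D" using linear_frechet_derivative assms by blast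
  have "(\<lambda>s. ?D (s *\<^sub>R w)) = (\<lambda>s. ?D w * s)"
    using linear.scaleR[OF lin] by (auto simp: mult.commute)
  then show ?thesis using 3 unfolding has_field_derivative_def by simp
qed

lemma dir_deriv_pd:
  fixes f :: "pt \<Rightarrow> real"
  assumes "f differentiable at (p + t *\<^sub>R axis i 1)"
  shows "((\<lambda>s. f (p + s *\<^sub>R axis i 1)) has_real_derivative pd i f (p + t *\<^sub>R axis i 1)) (at t)"
  using dir_deriv[OF assms] unfolding pd_def by simp

lemma norm_two_axis:
  fixes s t :: real
  assumes "0 \<le> s" "0 \<le> t"
  shows "norm (s *\<^sub>R axis i (1::real) + t *\<^sub>R axis j 1) \<le> s + t"
proof -
  have "norm (s *\<^sub>R axis i (1::real) + t *\<^sub>R axis j 1) \<le> norm (s *\<^sub>R axis i (1::real)) + norm (t *\<^sub>R axis j (1::real))"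
    by (rule norm_triangle_ineq)
  also have "\<dots> = s + t" using assms by simp
  finally show ?thesis .
qed

lemma mixed_mvt:
  fixes f :: "pt \<Rightarrow> real"
  assumes fd: "\<And>y. y \<in> ball x r \<Longrightarrow> f differentiable at y"
    and f1d: "\<And>y. y \<in> ball x r \<Longrightarrow> pd i f differentiable at y"
    and h: "0 < h" "2*h < r"
  shows "\<exists>q. norm (q - x) < 2*h \<and>
     f (x + h *\<^sub>R axis j 1 + h *\<^sub>R axis i 1) - f (x + h *\<^sub>R axis i 1) - f (x + h *\<^sub>R axis j 1) + f x
       = h * h * pd j (pd i f) q"
proof -
  define u :: pt where "u = axis i 1"
  define v :: pt where "v = axis j 1"
  have inball: "x + s *\<^sub>R u + t *\<^sub>R v \<in> ball x r" if "0 \<le> s" "s \<le> h" "0 \<le> t" "t \<le> h" for s t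
  proof -
    have "norm (s *\<^sub>R u + t *\<^sub>R v) \<le> s + t" unfolding u_def v_def using that norm_two_axis by blast
    moreover have "dist x (x + (s *\<^sub>R u + t *\<^sub>R v)) = norm (s *\<^sub>R u + t *\<^sub>R v)"
      by (metis add_diff_cancel_left' dist_commute dist_norm)
    ultimately show ?thesis using that h by (simp add: add.assoc)
  qed
  define \<phi> where "\<phi> s = f ((x + h *\<^sub>R v) + s *\<^sub>R u) - f (x + s *\<^sub>R u)" for s
  have d\<phi>: "(\<phi> has_real_derivative (pd i f ((x + h *\<^sub>R v) + s *\<^sub>R u) - pd i f (x + s *\<^sub>R u))) (at s)"
    if "0 \<le> s" "s \<le> h" for s
  proof -
    have a: "(x + h *\<^sub>R v) + s *\<^sub>R u \<in> ball x r" using inball[of s h] that h by (simp add: algebra_simps)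
    have b: "x + s *\<^sub>R u \<in> ball x r" using inball[of s 0] that h by simp
    show ?thesis unfolding \<phi>_def u_def
      using DERIV_diff[OF dir_deriv_pd[OF fd[OF a[unfolded u_def]]] dir_deriv_pd[OF fd[OF b[unfolded u_def]]]]
      by simp
  qed
  obtain s1 where s1: "0 < s1" "s1 < h"
    "\<phi> h - \<phi> 0 = (h - 0) * (pd i f ((x + h *\<^sub>R v) + s1 *\<^sub>R u) - pd i f (x + s1 *\<^sub>R u))"
    using MVT2[OF h(1) d\<phi>] by auto
  define \<psi> where "\<psi> t = pd i f ((x + s1 *\<^sub>R u) + t *\<^sub>R v)" for t
  have d\<psi>: "(\<psi> has_real_derivative pd j (pd i f) ((x + s1 *\<^sub>R u) + t *\<^sub>R v)) (at t)"
    if "0 \<le> t" "t \<le> h" for t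
  proof -
    have a: "(x + s1 *\<^sub>R u) + t *\<^sub>R v \<in> ball x r" using inball[of s1 t] that s1 by simp
    show ?thesis unfolding \<psi>_def v_def
      using dir_deriv_pd[OF f1d[OF a[unfolded v_def]]] by simp
  qed
  obtain t1 where t1: "0 < t1" "t1 < h"
    "\<psi> h - \<psi> 0 = (h - 0) * pd j (pd i f) ((x + s1 *\<^sub>R u) + t1 *\<^sub>R v)"
    using MVT2[OF h(1) d\<psi>] by auto
  define q where "q = (x + s1 *\<^sub>R u) + t1 *\<^sub>R v"
  have qx: "q - x = s1 *\<^sub>R u + t1 *\<^sub>R v" unfolding q_def by (simp add: add.assoc)
  have "norm (q - x) \<le> s1 + t1" unfolding qx u_def v_def
    using norm_two_axis[of s1 t1 i j] s1 t1 by linarith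
  then have nq: "norm (q - x) < 2*h" using s1 t1 by simp
  have comm: "(x + s1 *\<^sub>R u) + h *\<^sub>R v = (x + h *\<^sub>R v) + s1 *\<^sub>R u"
    by (simp add: add.commute add.left_commute)
  have e1: "\<psi> h - \<psi> 0 = pd i f ((x + h *\<^sub>R v) + s1 *\<^sub>R u) - pd i f (x + s1 *\<^sub>R u)"
    unfolding \<psi>_def comm by simp
  have e2: "\<phi> h - \<phi> 0 = f (x + h *\<^sub>R v + h *\<^sub>R u) - f (x + h *\<^sub>R u) - f (x + h *\<^sub>R v) + f x"
    unfolding \<phi>_def by simp
  have "\<phi> h - \<phi> 0 = h * (\<psi> h - \<psi> 0)" using s1(3) e1 by simp
  also have "\<dots> = h * h * pd j (pd i f) q" using t1(3) unfolding q_def by simp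
  finally have "f (x + h *\<^sub>R v + h *\<^sub>R u) - f (x + h *\<^sub>R u) - f (x + h *\<^sub>R v) + f x = h * h * pd j (pd i f) q"
    using e2 by simp
  then show ?thesis using nq unfolding u_def v_def by blast
qed

lemma schwarz_real:
  fixes f :: "pt \<Rightarrow> real"
  assumes U: "open U" and x: "x \<in> U" and C2: "Ck_on 2 U f"
  shows "pd i (pd j f) x = pd j (pd i f) x"
proof -
  have C2': "Ck_on (Suc (Suc 0)) U f" using C2 unfolding numeral_2_eq_2 .
  have fdU: "f differentiable_on U" and f1dU: "\<And>i. pd i f differentiable_on U"
    and cont: "\<And>i j. continuous_on U (pd j (pd i f))"
    using C2' by (simp_all only: Ck_on.simps)
  obtain r where r: "r > 0" "ball x r \<subseteq> U" using U x open_contains_ball by blast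
  have fd: "\<And>y. y \<in> ball x r \<Longrightarrow> f differentiable at y"
    using fdU r differentiable_on_eq_differentiable_at[OF U] by blast
  have f1d: "\<And>i y. y \<in> ball x r \<Longrightarrow> pd i f differentiable at y"
    using f1dU r differentiable_on_eq_differentiable_at[OF U] by blast
  have ic: "\<And>i j. isCont (pd j (pd i f)) x"
    using cont continuous_on_eq_continuous_at[OF U] x by blast
  let ?a = "pd j (pd i f) x" and ?b = "pd i (pd j f) x"
  show ?thesis
  proof (rule ccontr)
    assume ne: "?b \<noteq> ?a"
    define e where "e = \<bar>?a - ?b\<bar> / 2"
    have "?a - ?b \<noteq> 0" using ne by auto
    then have "\<bar>?a - ?b\<bar> > 0" by simp
    then have e: "e > 0" unfolding e_def by simp
    have c1: "\<forall>e>0. \<exists>d>0. \<forall>y. dist y x < d \<longrightarrow> dist (pd j (pd i f) y) ?a < e"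
      using ic[where i=i and j=j] unfolding continuous_at_eps_delta .
    have c2: "\<forall>e>0. \<exists>d>0. \<forall>y. dist y x < d \<longrightarrow> dist (pd i (pd j f) y) ?b < e"
      using ic[where i=j and j=i] unfolding continuous_at_eps_delta .
    obtain d1 where d1: "d1 > 0" "\<And>y. dist y x < d1 \<Longrightarrow> dist (pd j (pd i f) y) ?a < e"
      using c1 e by meson
    obtain d2 where d2: "d2 > 0" "\<And>y. dist y x < d2 \<Longrightarrow> dist (pd i (pd j f) y) ?b < e"
      using c2 e by meson
    define h where "h = min r (min d1 d2) / 3"
    have h: "0 < h" "2*h < r" "2*h < d1" "2*h < d2" using r d1 d2 unfolding h_def by auto
    obtain q1 where q1: "norm (q1 - x) < 2*h"
      "f (x + h *\<^sub>R axis j 1 + h *\<^sub>R axis i 1) - f (x + h *\<^sub>R axis i 1) - f (x + h *\<^sub>R axis j 1) + f x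
       = h * h * pd j (pd i f) q1"
      using mixed_mvt[OF fd f1d h(1,2)] by blast
    obtain q2 where q2: "norm (q2 - x) < 2*h"
      "f (x + h *\<^sub>R axis i 1 + h *\<^sub>R axis j 1) - f (x + h *\<^sub>R axis j 1) - f (x + h *\<^sub>R axis i 1) + f x
       = h * h * pd i (pd j f) q2"
      using mixed_mvt[OF fd f1d h(1,2)] by blast
    have "h * h * pd j (pd i f) q1 = h * h * pd i (pd j f) q2"
      using q1(2) q2(2) by (simp add: algebra_simps)
    then have eq: "pd j (pd i f) q1 = pd i (pd j f) q2" using h(1) by simp
    have "dist (pd j (pd i f) q1) ?a < e" using d1(2)[of q1] q1(1) h by (simp add: dist_norm)
    moreover have "dist (pd i (pd j f) q2) ?b < e" using d2(2)[of q2] q2(1) h by (simp add: dist_norm)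
    ultimately have "\<bar>?a - ?b\<bar> < 2 * e" using eq by (simp add: dist_real_def)
    then show False unfolding e_def by simp
  qed
qed

lemma Ck_diff: "open U \<Longrightarrow> Ck_on (Suc n) U f \<Longrightarrow> y \<in> U \<Longrightarrow> f differentiable at y"
  using differentiable_on_eq_differentiable_at by auto

lemma Ck_pd: "Ck_on (Suc n) U f \<Longrightarrow> Ck_on n U (pd i f)"
  by simp

lemma Ck2_pd_diff: "open U \<Longrightarrow> Ck_on 2 U f \<Longrightarrow> y \<in> U \<Longrightarrow> pd i f differentiable at y"
  unfolding numeral_2_eq_2 using Ck_diff Ck_pd by blast

lemma Ck2_diff: "open U \<Longrightarrow> Ck_on 2 U f \<Longrightarrow> y \<in> U \<Longrightarrow> f differentiable at y"
  unfolding numeral_2_eq_2 using Ck_diff by blast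

lemma pd_linear:
  assumes "bounded_linear L" "f differentiable at x"
  shows "pd i (\<lambda>z. L (f z)) x = L (pd i f x)"
proof -
  have "(f has_derivative frechet_derivative f (at x)) (at x)" using assms(2) frechet_derivative_works by blast
  from pd_has[OF bounded_linear.has_derivative[OF assms(1) this], of i] show ?thesis
    unfolding pd_def by simp
qed

lemma pd_linear2:
  assumes "open U" "x \<in> U" "bounded_linear L" "Ck_on 2 U f"
  shows "pd a (pd b (\<lambda>z. L (f z))) x = L (pd a (pd b f) x)"
proof -
  have "pd a (pd b (\<lambda>z. L (f z))) x = pd a (\<lambda>z. L (pd b f z)) x"
    by (rule pd_cong[OF assms(1,2)]) (simp add: pd_linear[OF assms(3) Ck2_diff[OF assms(1,4)]])
  also have "\<dots> = L (pd a (pd b f) x)"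
    by (rule pd_linear[OF assms(3) Ck2_pd_diff[OF assms(1,4,2)]])
  finally show ?thesis .
qed

lemma schwarz_complex:
  fixes f :: "pt \<Rightarrow> complex"
  assumes "open U" "x \<in> U" "Ck_on 2 U f"
  shows "pd a (pd b f) x = pd b (pd a f) x"
proof (rule complex_eqI)
  have r: "Ck_on 2 U (\<lambda>z. Re (f z))" by (rule Ck_on_linear[OF assms(1) bounded_linear_Re assms(3)])
  have i: "Ck_on 2 U (\<lambda>z. Im (f z))" by (rule Ck_on_linear[OF assms(1) bounded_linear_Im assms(3)])
  show "Re (pd a (pd b f) x) = Re (pd b (pd a f) x)"
    using pd_linear2[OF assms(1,2) bounded_linear_Re assms(3), of a b]
      pd_linear2[OF assms(1,2) bounded_linear_Re assms(3), of b a] schwarz_real[OF assms(1,2) r, of a b]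
    by simp
  show "Im (pd a (pd b f) x) = Im (pd b (pd a f) x)"
    using pd_linear2[OF assms(1,2) bounded_linear_Im assms(3), of a b]
      pd_linear2[OF assms(1,2) bounded_linear_Im assms(3), of b a] schwarz_real[OF assms(1,2) i, of a b]
    by simp
qed

lemma pd_add:
  assumes "f differentiable at x" "h differentiable at x"
  shows "pd i (\<lambda>z. f z + h z) x = pd i f x + pd i h x"
proof -
  have 1: "(f has_derivative frechet_derivative f (at x)) (at x)" "(h has_derivative frechet_derivative h (at x)) (at x)"
    using assms frechet_derivative_works by blast+
  show ?thesis using pd_has[OF has_derivative_add[OF 1], of i] unfolding pd_def by simp
qed

lemma pd_diff:
  assumes "f differentiable at x" "h differentiable at x"
  shows "pd i (\<lambda>z. f z - h z) x = pd i f x - pd i h x"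
proof -
  have 1: "(f has_derivative frechet_derivative f (at x)) (at x)" "(h has_derivative frechet_derivative h (at x)) (at x)"
    using assms frechet_derivative_works by blast+
  show ?thesis using pd_has[OF has_derivative_diff[OF 1], of i] unfolding pd_def by simp
qed

lemma pd_mult:
  fixes f h :: "pt \<Rightarrow> 'a::real_normed_algebra"
  assumes "f differentiable at x" "h differentiable at x"
  shows "pd i (\<lambda>z. f z * h z) x = pd i f x * h x + f x * pd i h x"
proof -
  have 1: "(f has_derivative frechet_derivative f (at x)) (at x)" "(h has_derivative frechet_derivative h (at x)) (at x)"
    using assms frechet_derivative_works by blast+
  show ?thesis using pd_has[OF has_derivative_mult[OF 1], of i] unfolding pd_def by (simp add: add.commute)
qed

lemma pd_const: "pd i (\<lambda>z. c) x = 0"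
  by (subst pd_has[of _ "\<lambda>_. 0"]) (auto intro: derivative_eq_intros)

lemma pd_sum:
  assumes "finite A" "\<And>a. a \<in> A \<Longrightarrow> f a differentiable at x"
  shows "pd i (\<lambda>z. \<Sum>a\<in>A. f a z) x = (\<Sum>a\<in>A. pd i (f a) x)"
  using assms
proof (induction A rule: finite_induct)
  case empty
  then show ?case by (simp add: pd_const)
next
  case (insert a A)
  have "pd i (\<lambda>z. \<Sum>a\<in>insert a A. f a z) x = pd i (\<lambda>z. f a z + (\<Sum>a\<in>A. f a z)) x"
    using insert.hyps by simp
  also have "\<dots> = pd i (f a) x + pd i (\<lambda>z. \<Sum>a\<in>A. f a z) x"
    by (rule pd_add) (use insert.prems insert.hyps in \<open>auto intro!: differentiable_sum\<close>)
  also have "\<dots> = (\<Sum>a\<in>insert a A. pd i (f a) x)" using insert by simp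
  finally show ?case .
qed

lemma pd_of_real:
  "f differentiable at x \<Longrightarrow> pd i (\<lambda>z. complex_of_real (f z)) x = of_real (pd i f x)"
  using pd_linear[OF bounded_linear_of_real] by blast

lemma diff_of_real: "f differentiable at x \<Longrightarrow> (\<lambda>z. complex_of_real (f z)) differentiable at x"
  using differentiable_compose[of of_real f] bounded_linear_imp_differentiable[OF bounded_linear_of_real]
  by (simp add: differentiable_compose o_def)

lemma pd_cong_zero:
  assumes "open U" "x \<in> U" "\<And>y. y \<in> U \<Longrightarrow> f y = 0"
  shows "pd i f x = 0"
  using pd_cong[OF assms(1,2), of f "\<lambda>_. 0"] assms(3) pd_const by metis

definition adj3 :: "real^3^3 \<Rightarrow> 3 \<Rightarrow> 3 \<Rightarrow> real" where
  "adj3 A i j = (if i = 1 then (if j = 1 then (A$2$2*A$3$3 - A$2$3*A$3$2) else if j = 2 then (A$1$3*A$3$2 - A$1$2*A$3$3) else (A$1$2*A$2$3 - A$1$3*A$2$2)) else if i = 2 then (if j = 1 then (A$2$3*A$3$1 - A$2$1*A$3$3) else if j = 2 then (A$1$1*A$3$3 - A$1$3*A$3$1) else (A$1$3*A$2$1 - A$1$1*A$2$3)) else (if j = 1 then (A$2$1*A$3$2 - A$2$2*A$3$1) else if j = 2 then (A$1$2*A$3$1 - A$1$1*A$3$2) else (A$1$1*A$2$2 - A$1$2*A$2$1)))"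

definition inv3 :: "real^3^3 \<Rightarrow> real^3^3" where
  "inv3 A = (\<chi> i j. adj3 A i j / det A)"

lemma adj_right: "\<forall>i j. (\<Sum>k\<in>UNIV. A$i$k * adj3 A k j) = (if i = j then det A else 0)"
  by (simp add: forall_3 sum_3 adj3_def det_3 algebra_simps)

lemma adj_left: "\<forall>i j. (\<Sum>k\<in>UNIV. adj3 A i k * A$k$j) = (if i = j then det A else 0)"
  by (simp add: forall_3 sum_3 adj3_def det_3 algebra_simps)

lemma inv3_right: "det A \<noteq> 0 \<Longrightarrow> A ** inv3 A = mat 1"
proof -
  assume d: "det A \<noteq> 0"
  have "(\<Sum>k\<in>UNIV. A$i$k * (adj3 A k j / det A)) = (if i = j then 1 else 0)" for i j
  proof -
    have "(\<Sum>k\<in>UNIV. A$i$k * (adj3 A k j / det A)) = (\<Sum>k\<in>UNIV. A$i$k * adj3 A k j) / det A"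
      by (simp add: sum_divide_distrib)
    then show ?thesis using adj_right d by simp
  qed
  then show ?thesis by (simp add: vec_eq_iff matrix_matrix_mult_def inv3_def mat_def)
qed

lemma inv3_left: "det A \<noteq> 0 \<Longrightarrow> inv3 A ** A = mat 1"
proof -
  assume d: "det A \<noteq> 0"
  have "(\<Sum>k\<in>UNIV. (adj3 A i k / det A) * A$k$j) = (if i = j then 1 else 0)" for i j
  proof -
    have "(\<Sum>k\<in>UNIV. (adj3 A i k / det A) * A$k$j) = (\<Sum>k\<in>UNIV. adj3 A i k * A$k$j) / det A"
      by (simp add: sum_divide_distrib)
    then show ?thesis using adj_left d by simp
  qed
  then show ?thesis by (simp add: vec_eq_iff matrix_matrix_mult_def inv3_def mat_def)
qed

lemma matrix_inv_3: 
  assumes "det A \<noteq> 0" shows "matrix_inv A = inv3 A"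
proof -
  let ?P = "\<lambda>A'. A ** A' = mat 1 \<and> A' ** A = mat 1"
  have "?P (inv3 A)" using inv3_right[OF assms] inv3_left[OF assms] by simp
  then have P: "?P (matrix_inv A)" unfolding matrix_inv_def by (rule someI)
  have "matrix_inv A = matrix_inv A ** (A ** inv3 A)" using inv3_right[OF assms] by simp
  also have "\<dots> = (matrix_inv A ** A) ** inv3 A" by (simp add: matrix_mul_assoc)
  also have "\<dots> = inv3 A" using P by simp
  finally show ?thesis .
qed

lemma bl_comp2: "bounded_linear (\<lambda>M::real^3^3. M $ a $ b)"
  using bounded_linear_compose[OF bounded_linear_vec_nth[of b] bounded_linear_vec_nth[of a]] by simp

locale geo =
  fixes U :: "pt set" and g :: "pt \<Rightarrow> real^3^3"
  assumes pm: "pr_metric U g"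
begin

lemma U_open: "open U" using pm unfolding pr_metric_def by simp

lemma g_smooth: "smooth_on U g" using pm unfolding pr_metric_def by simp

lemma g_sym: "y \<in> U \<Longrightarrow> g y $ a $ b = g y $ b $ a"
proof -
  assume y: "y \<in> U"
  have "transpose (g y) = g y" using pm y unfolding pr_metric_def by blast
  then have "transpose (g y) $ a $ b = g y $ a $ b" by simp
  then show ?thesis by (simp add: transpose_def)
qed

lemma g_det: "y \<in> U \<Longrightarrow> det (g y) \<noteq> 0"
  using pm unfolding pr_metric_def by simp

lemma gc_Ck: "Ck_on n U (\<lambda>y. g y $ a $ b)"
  using Ck_on_linear[OF U_open bl_comp2 smooth_Ck[OF g_smooth]] by simp

lemma g_diff: "y \<in> U \<Longrightarrow> (\<lambda>y. g y $ a $ b) differentiable at y"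
  using Ck2_diff[OF U_open gc_Ck] .

lemma dg_diff: "y \<in> U \<Longrightarrow> pd i (\<lambda>y. g y $ a $ b) differentiable at y"
  using Ck2_pd_diff[OF U_open gc_Ck] .

lemma dg_sym: "y \<in> U \<Longrightarrow> pd i (\<lambda>y. g y $ a $ b) y = pd i (\<lambda>y. g y $ b $ a) y"
  by (rule pd_cong[OF U_open]) (auto simp: g_sym)

lemma ginv_eq: "y \<in> U \<Longrightarrow> ginv g y = inv3 (g y)"
  unfolding ginv_def using matrix_inv_3 g_det by blast

lemma G_right: "y \<in> U \<Longrightarrow> (\<Sum>b\<in>UNIV. g y $ a $ b * ginv g y $ b $ c) = (if a = c then 1 else 0)"
proof -
  assume y: "y \<in> U"
  have "g y ** ginv g y = mat 1" using inv3_right[OF g_det[OF y]] ginv_eq[OF y] by simp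
  then have "(g y ** ginv g y) $ a $ c = mat 1 $ a $ c" by simp
  then show ?thesis unfolding matrix_matrix_mult_def mat_def by simp
qed

lemma G_left: "y \<in> U \<Longrightarrow> (\<Sum>b\<in>UNIV. ginv g y $ a $ b * g y $ b $ c) = (if a = c then 1 else 0)"
proof -
  assume y: "y \<in> U"
  have "ginv g y ** g y = mat 1" using inv3_left[OF g_det[OF y]] ginv_eq[OF y] by simp
  then have "(ginv g y ** g y) $ a $ c = mat 1 $ a $ c" by simp
  then show ?thesis unfolding matrix_matrix_mult_def mat_def by simp
qed

lemma G_sym: "y \<in> U \<Longrightarrow> ginv g y $ a $ b = ginv g y $ b $ a"
proof -
  assume y: "y \<in> U"
  have s: "g y $ 2 $ 1 = g y $ 1 $ 2" "g y $ 3 $ 1 = g y $ 1 $ 3" "g y $ 3 $ 2 = g y $ 2 $ 3"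
    using g_sym[OF y] by blast+
  have "\<forall>a b. adj3 (g y) a b = adj3 (g y) b a"
    unfolding adj3_def by (simp add: forall_3 s algebra_simps)
  then have "adj3 (g y) a b = adj3 (g y) b a" by blast
  then show ?thesis using ginv_eq[OF y] by (simp add: inv3_def)
qed

lemma G_diff: "y \<in> U \<Longrightarrow> (\<lambda>z. ginv g z $ i $ j) differentiable at y"
proof -
  assume y: "y \<in> U"
  have d: "\<And>a b. (\<lambda>z. g z $ a $ b) differentiable at y" using g_diff[OF y] .
  have "\<forall>i j. (\<lambda>z. adj3 (g z) i j) differentiable at y"
    by (simp add: forall_3 adj3_def d)
  moreover have "(\<lambda>z. det (g z)) differentiable at y"
    by (simp add: det_3 d)
  ultimately have A: "(\<lambda>z. adj3 (g z) i j / det (g z)) differentiable at y"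
    using g_det[OF y] by (intro differentiable_divide) auto
  have B: "\<And>z. z \<in> U \<Longrightarrow> adj3 (g z) i j / det (g z) = ginv g z $ i $ j"
    using ginv_eq by (simp add: inv3_def)
  show ?thesis by (rule diff_cong[OF U_open y B A])
qed

lemma Chr_diff: "y \<in> U \<Longrightarrow> (\<lambda>z. Chr g z c a b) differentiable at y"
proof -
  assume y: "y \<in> U"
  have h: "(\<lambda>x. pd a (\<lambda>y. g y $ d $ b) x + pd b (\<lambda>y. g y $ d $ a) x - pd d (\<lambda>y. g y $ a $ b) x) differentiable at y" for d
    by (intro differentiable_add differentiable_diff dg_diff y)
  have "(\<lambda>x. ginv g x $ c $ d * (pd a (\<lambda>y. g y $ d $ b) x + pd b (\<lambda>y. g y $ d $ a) x - pd d (\<lambda>y. g y $ a $ b) x)) differentiable at y" for d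
    using differentiable_mult[OF G_diff[OF y] h] .
  then have "(\<lambda>x. \<Sum>d\<in>UNIV. ginv g x $ c $ d * (pd a (\<lambda>y. g y $ d $ b) x + pd b (\<lambda>y. g y $ d $ a) x - pd d (\<lambda>y. g y $ a $ b) x)) differentiable at y"
    by (intro differentiable_sum) auto
  then show ?thesis unfolding Chr_def by (intro differentiable_divide) auto
qed

lemma Chr_sym: "y \<in> U \<Longrightarrow> Chr g y c a b = Chr g y c b a"
  unfolding Chr_def
  by (intro arg_cong[where f="\<lambda>t. t / 2"] sum.cong refl) (simp add: dg_sym[of y _ a b])

lemma dChr_sym: "y \<in> U \<Longrightarrow> pd e (\<lambda>z. Chr g z c a b) y = pd e (\<lambda>z. Chr g z c b a) y"
  by (rule pd_cong[OF U_open]) (auto simp: Chr_sym)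

lemma lower_Chr:
  assumes y: "y \<in> U"
  shows "(\<Sum>e\<in>UNIV. g y $ b $ e * Chr g y e i a) =
     (pd i (\<lambda>z. g z $ b $ a) y + pd a (\<lambda>z. g z $ b $ i) y - pd b (\<lambda>z. g z $ i $ a) y) / 2"
proof -
  define X where "X d = pd i (\<lambda>z. g z $ d $ a) y + pd a (\<lambda>z. g z $ d $ i) y - pd d (\<lambda>z. g z $ i $ a) y" for d
  have "(\<Sum>e\<in>UNIV. g y $ b $ e * Chr g y e i a) = (\<Sum>e\<in>UNIV. g y $ b $ e * ((\<Sum>d\<in>UNIV. ginv g y $ e $ d * X d) / 2))"
    unfolding Chr_def X_def ..
  also have "\<dots> = (\<Sum>e\<in>UNIV. \<Sum>d\<in>UNIV. g y $ b $ e * ginv g y $ e $ d * X d) / 2"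
    by (simp add: sum_divide_distrib sum_distrib_left mult.assoc)
  also have "\<dots> = (\<Sum>d\<in>UNIV. (\<Sum>e\<in>UNIV. g y $ b $ e * ginv g y $ e $ d) * X d) / 2"
    by (subst sum.swap) (simp add: sum_distrib_right)
  also have "\<dots> = (\<Sum>d\<in>UNIV. (if b = d then X d else 0)) / 2"
  proof -
    have "(\<Sum>d\<in>UNIV. (\<Sum>e\<in>UNIV. g y $ b $ e * ginv g y $ e $ d) * X d) = (\<Sum>d\<in>UNIV. (if b = d then X d else 0))"
      by (rule sum.cong[OF refl]) (simp add: G_right[OF y])
    then show ?thesis by simp
  qed
  also have "\<dots> = X b / 2" by simp
  finally show ?thesis unfolding X_def .
qed

lemma compat:
  assumes y: "y \<in> U"
  shows "pd i (\<lambda>z. g z $ a $ b) y = (\<Sum>e\<in>UNIV. g y $ e $ b * Chr g y e i a + g y $ a $ e * Chr g y e i b)"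
proof -
  have "(\<Sum>e\<in>UNIV. g y $ e $ b * Chr g y e i a + g y $ a $ e * Chr g y e i b)
      = (\<Sum>e\<in>UNIV. g y $ b $ e * Chr g y e i a) + (\<Sum>e\<in>UNIV. g y $ a $ e * Chr g y e i b)"
    by (simp add: sum.distrib g_sym[OF y, of _ b])
  also have "\<dots> = pd i (\<lambda>z. g z $ a $ b) y"
    unfolding lower_Chr[OF y]
    using dg_sym[OF y, of i b a] dg_sym[OF y, of a b i] dg_sym[OF y, of b i a] by (simp add: field_simps)
  finally show ?thesis by simp
qed

end

context geo begin

definition nab :: "3 \<Rightarrow> (pt \<Rightarrow> complex^3) \<Rightarrow> pt \<Rightarrow> complex^3" where
  "nab a V x = (\<chi> c. pd a (\<lambda>y. V y $ c) x + (\<Sum>b\<in>UNIV. of_real (Chr g x c a b) * V x $ b))"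

lemma nab_comp: "nab a V x $ c = pd a (\<lambda>y. V y $ c) x + (\<Sum>b\<in>UNIV. of_real (Chr g x c a b) * V x $ b)"
  by (simp add: nab_def)

lemma Cd: "x \<in> U \<Longrightarrow> (\<lambda>y. complex_of_real (Chr g y c a b)) differentiable at x"
  using diff_of_real[OF Chr_diff] .

lemma pdC: "x \<in> U \<Longrightarrow> pd i (\<lambda>y. complex_of_real (Chr g y c a b)) x = of_real (pd i (\<lambda>y. Chr g y c a b) x)"
  using pd_of_real[OF Chr_diff] .

lemma pd_nab:
  assumes x: "x \<in> U" and Vd: "\<And>d. (\<lambda>y. V y $ d) differentiable at x"
    and Vdd: "pd b (\<lambda>y. V y $ c) differentiable at x"
  shows "pd a (\<lambda>y. nab b V y $ c) x = pd a (pd b (\<lambda>y. V y $ c)) x +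
    (\<Sum>d\<in>UNIV. of_real (pd a (\<lambda>y. Chr g y c b d) x) * V x $ d + of_real (Chr g x c b d) * pd a (\<lambda>y. V y $ d) x)"
proof -
  have m: "(\<lambda>y. of_real (Chr g y c b d) * V y $ d) differentiable at x" for d
    using differentiable_mult[OF Cd[OF x] Vd] .
  have s: "(\<lambda>y. \<Sum>d\<in>UNIV. of_real (Chr g y c b d) * V y $ d) differentiable at x"
    using m by (intro differentiable_sum) auto
  have "pd a (\<lambda>y. nab b V y $ c) x = pd a (\<lambda>y. pd b (\<lambda>y. V y $ c) y + (\<Sum>d\<in>UNIV. of_real (Chr g y c b d) * V y $ d)) x"
    by (simp add: nab_comp)
  also have "\<dots> = pd a (pd b (\<lambda>y. V y $ c)) x + pd a (\<lambda>y. \<Sum>d\<in>UNIV. of_real (Chr g y c b d) * V y $ d) x"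
    using pd_add[OF Vdd s] by simp
  also have "pd a (\<lambda>y. \<Sum>d\<in>UNIV. of_real (Chr g y c b d) * V y $ d) x = (\<Sum>d\<in>UNIV. pd a (\<lambda>y. of_real (Chr g y c b d) * V y $ d) x)"
    using pd_sum[of UNIV "\<lambda>d y. of_real (Chr g y c b d) * V y $ d"] m by simp
  also have "\<dots> = (\<Sum>d\<in>UNIV. of_real (pd a (\<lambda>y. Chr g y c b d) x) * V x $ d + of_real (Chr g x c b d) * pd a (\<lambda>y. V y $ d) x)"
    using pd_mult[OF Cd[OF x] Vd] pdC[OF x] by simp
  finally show ?thesis .
qed

lemma ricci:
  assumes x: "x \<in> U" and V: "\<And>c. Ck_on 2 U (\<lambda>y. V y $ c)"
  shows "(\<Sum>d\<in>UNIV. of_real (Riem g x a b d c) * V x $ d) = nab a (nab b V) x $ c - nab b (nab a V) x $ c"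
proof -
  have Vd: "\<And>d. (\<lambda>y. V y $ d) differentiable at x" using Ck2_diff[OF U_open V x] .
  have Vdd: "\<And>d i. pd i (\<lambda>y. V y $ d) differentiable at x" using Ck2_pd_diff[OF U_open V x] .
  have sw: "pd a (pd b (\<lambda>y. V y $ c)) x = pd b (pd a (\<lambda>y. V y $ c)) x"
    using schwarz_complex[OF U_open x V] .
  have "nab a (nab b V) x $ c - nab b (nab a V) x $ c =
     (pd a (\<lambda>y. nab b V y $ c) x + (\<Sum>e\<in>UNIV. of_real (Chr g x c a e) * nab b V x $ e))
   - (pd b (\<lambda>y. nab a V y $ c) x + (\<Sum>e\<in>UNIV. of_real (Chr g x c b e) * nab a V x $ e))"
    by (simp add: nab_comp)
  also have "\<dots> = (\<Sum>d\<in>UNIV. of_real (Riem g x a b d c) * V x $ d)"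
    apply (simp only: pd_nab[OF x Vd Vdd] sw)
    by (simp add: nab_comp Riem_def sum_3 algebra_simps)
  finally show ?thesis by simp
qed

lemma metric_L:
  assumes x: "x \<in> U" and V: "\<And>c. (\<lambda>y. V y $ c) differentiable at x"
    and Y: "\<And>c. (\<lambda>y. Y y $ c) differentiable at x"
  shows "pd i (\<lambda>z. gC g z (V z) (Y z)) x = gC g x (nab i V x) (Y x) + gC g x (V x) (nab i Y x)"
proof -
  have gd: "\<And>a b. (\<lambda>z. complex_of_real (g z $ a $ b)) differentiable at x"
    using diff_of_real[OF g_diff[OF x]] .
  have m1: "\<And>a b. (\<lambda>z. complex_of_real (g z $ a $ b) * V z $ a) differentiable at x"
    using differentiable_mult[OF gd V] .
  have m2: "\<And>a b. (\<lambda>z. complex_of_real (g z $ a $ b) * V z $ a * Y z $ b) differentiable at x"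
    using differentiable_mult[OF m1 Y] .
  have s1: "\<And>a. (\<lambda>z. \<Sum>b\<in>UNIV. complex_of_real (g z $ a $ b) * V z $ a * Y z $ b) differentiable at x"
    using m2 by (intro differentiable_sum) auto
  have "pd i (\<lambda>z. gC g z (V z) (Y z)) x =
     pd i (\<lambda>z. \<Sum>a\<in>UNIV. \<Sum>b\<in>UNIV. complex_of_real (g z $ a $ b) * V z $ a * Y z $ b) x"
    by (simp add: gC_def)
  also have "\<dots> = (\<Sum>a\<in>UNIV. \<Sum>b\<in>UNIV. pd i (\<lambda>z. complex_of_real (g z $ a $ b) * V z $ a * Y z $ b) x)"
    using pd_sum[of UNIV "\<lambda>a z. \<Sum>b\<in>UNIV. complex_of_real (g z $ a $ b) * V z $ a * Y z $ b"] s1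
      pd_sum[of UNIV "\<lambda>b z. complex_of_real (g z $ _ $ b) * V z $ _ * Y z $ b"] m2 by simp
  also have "\<dots> = (\<Sum>a\<in>UNIV. \<Sum>b\<in>UNIV.
      (of_real (pd i (\<lambda>z. g z $ a $ b) x) * V x $ a + of_real (g x $ a $ b) * pd i (\<lambda>z. V z $ a) x) * Y x $ b
      + of_real (g x $ a $ b) * V x $ a * pd i (\<lambda>z. Y z $ b) x)"
    using pd_mult[OF m1 Y] pd_mult[OF gd V] pd_of_real[OF g_diff[OF x]] by simp
  also have "\<dots> = gC g x (nab i V x) (Y x) + gC g x (V x) (nab i Y x)"
    unfolding compat[OF x] gC_def nab_comp
    by (simp add: sum_3 algebra_simps g_sym[OF x])
  finally show ?thesis .
qed

lemma riem_as: "Riem g x a b d c = - Riem g x b a d c"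
  by (simp add: Riem_def sum_3 algebra_simps)

lemma bianchi:
  assumes x: "x \<in> U"
  shows "Riem g x a b d c + Riem g x b d a c + Riem g x d a b c = 0"
  by (simp add: Riem_def sum_3 Chr_sym[OF x] dChr_sym[OF x] algebra_simps)

end

context geo begin

lemma riem_antisym:
  assumes x: "x \<in> U"
  shows "(\<Sum>e\<in>UNIV. Riem g x a b d e * g x $ e $ c) + (\<Sum>e\<in>UNIV. Riem g x a b c e * g x $ e $ d) = 0"
proof -
  define F where "F b' y = (\<Sum>e\<in>UNIV. g y $ e $ c * Chr g y e b' d + g y $ d $ e * Chr g y e b' c)" for b' y
  have cF: "pd b' (\<lambda>z. g z $ d $ c) y = F b' y" if "y \<in> U" for b' y
    unfolding F_def using compat[OF that, of b' d c] .
  have e1: "pd a' (pd b' (\<lambda>z. g z $ d $ c)) x = pd a' (F b') x" for a' b'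
    by (rule pd_cong[OF U_open x]) (simp add: cF)
  have sw: "pd a (pd b (\<lambda>z. g z $ d $ c)) x = pd b (pd a (\<lambda>z. g z $ d $ c)) x"
    using schwarz_real[OF U_open x gc_Ck] .
  have dF: "pd a' (F b') x = (\<Sum>e\<in>UNIV. pd a' (\<lambda>z. g z $ e $ c) x * Chr g x e b' d + g x $ e $ c * pd a' (\<lambda>z. Chr g z e b' d) x
       + (pd a' (\<lambda>z. g z $ d $ e) x * Chr g x e b' c + g x $ d $ e * pd a' (\<lambda>z. Chr g z e b' c) x))" for a' b'
  proof -
    have m1: "(\<lambda>y. g y $ e $ c * Chr g y e b' d) differentiable at x" for e
      using differentiable_mult[OF g_diff[OF x] Chr_diff[OF x]] .
    have m2: "(\<lambda>y. g y $ d $ e * Chr g y e b' c) differentiable at x" for e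
      using differentiable_mult[OF g_diff[OF x] Chr_diff[OF x]] .
    have m: "(\<lambda>y. g y $ e $ c * Chr g y e b' d + g y $ d $ e * Chr g y e b' c) differentiable at x" for e
      using differentiable_add[OF m1 m2] .
    have "pd a' (F b') x = (\<Sum>e\<in>UNIV. pd a' (\<lambda>y. g y $ e $ c * Chr g y e b' d + g y $ d $ e * Chr g y e b' c) x)"
      unfolding F_def using pd_sum[of UNIV "\<lambda>e y. g y $ e $ c * Chr g y e b' d + g y $ d $ e * Chr g y e b' c"] m
      by simp
    also have "\<dots> = (\<Sum>e\<in>UNIV. pd a' (\<lambda>y. g y $ e $ c * Chr g y e b' d) x + pd a' (\<lambda>y. g y $ d $ e * Chr g y e b' c) x)"
      using pd_add[OF m1 m2] by simp
    also have "\<dots> = (\<Sum>e\<in>UNIV. pd a' (\<lambda>z. g z $ e $ c) x * Chr g x e b' d + g x $ e $ c * pd a' (\<lambda>z. Chr g z e b' d) x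
       + (pd a' (\<lambda>z. g z $ d $ e) x * Chr g x e b' c + g x $ d $ e * pd a' (\<lambda>z. Chr g z e b' c) x))"
      using pd_mult[OF g_diff[OF x] Chr_diff[OF x]] by simp
    finally show ?thesis .
  qed
  have z: "pd a (F b) x - pd b (F a) x = 0" using e1[of a b] e1[of b a] sw by simp
  have "(\<Sum>e\<in>UNIV. Riem g x a b d e * g x $ e $ c) + (\<Sum>e\<in>UNIV. Riem g x a b c e * g x $ e $ d)
      = pd a (F b) x - pd b (F a) x"
    unfolding dF
    by (simp add: compat[OF x] Riem_def sum_3 algebra_simps g_sym[OF x])
  then show ?thesis using z by simp
qed

end

lemma delta_trick:
  fixes K l P :: "3 \<Rightarrow> complex"
  assumes Kl: "(\<Sum>d\<in>UNIV. K d * l d) = 1"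
    and H: "\<And>Z. (\<Sum>d\<in>UNIV. K d * Z d) = 0 \<Longrightarrow> (\<Sum>d\<in>UNIV. P d * Z d) = 0"
  shows "P a = K a * (\<Sum>d\<in>UNIV. P d * l d)"
proof -
  define Z where "Z i = (if i = a then 1 else 0) - K a * l i" for i
  have e1: "(\<Sum>d\<in>UNIV. K d * Z d) = K a - K a * (\<Sum>d\<in>UNIV. K d * l d)"
    unfolding Z_def using exhaust_3[of a] by (auto simp: sum_3 algebra_simps)
  have e2: "(\<Sum>d\<in>UNIV. P d * Z d) = P a - K a * (\<Sum>d\<in>UNIV. P d * l d)"
    unfolding Z_def using exhaust_3[of a] by (auto simp: sum_3 algebra_simps)
  have "(\<Sum>d\<in>UNIV. K d * Z d) = 0" using e1 Kl by simp
  then have "(\<Sum>d\<in>UNIV. P d * Z d) = 0" by (rule H)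
  then show ?thesis using e2 by simp
qed

lemma alg1:
  fixes M Gm :: "3 \<Rightarrow> 3 \<Rightarrow> complex" and K k l :: "3 \<Rightarrow> complex" and B :: "3 \<Rightarrow> 3 \<Rightarrow> complex"
  assumes Bdef: "\<And>a c. B a c = (\<Sum>d\<in>UNIV. M a d * Gm d c)"
    and kdef: "\<And>c. k c = (\<Sum>d\<in>UNIV. K d * Gm d c)"
    and Gsym: "\<And>a b. Gm a b = Gm b a"
    and Kk: "(\<Sum>d\<in>UNIV. K d * k d) = 0"
    and Kl: "(\<Sum>d\<in>UNIV. K d * l d) = 1"
    and H1: "\<And>a. (\<Sum>d\<in>UNIV. M a d * k d) = 0"
    and H2: "\<And>X Y. (\<Sum>d\<in>UNIV. K d * X d) = 0 \<Longrightarrow> (\<Sum>d\<in>UNIV. K d * Y d) = 0 \<Longrightarrow>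
               (\<Sum>a\<in>UNIV. X a * (\<Sum>d\<in>UNIV. M a d * Y d)) = 0"
  shows "(\<Sum>a\<in>UNIV. k a * B a c) = (\<Sum>a\<in>UNIV. B a a) * k c"
    and "(\<Sum>a\<in>UNIV. \<Sum>c\<in>UNIV. B a c * B c a) = (\<Sum>a\<in>UNIV. B a a)^2"
proof -
  define \<mu> where "\<mu> d = (\<Sum>i\<in>UNIV. l i * M i d)" for d
  define \<nu> where "\<nu> a = (\<Sum>j\<in>UNIV. (M a j - K a * \<mu> j) * l j)" for a
  have step1: "(\<Sum>d\<in>UNIV. M a d * Y d) = K a * (\<Sum>d\<in>UNIV. \<mu> d * Y d)"
    if Y: "(\<Sum>d\<in>UNIV. K d * Y d) = 0" for a Y
  proof -
    have "(\<Sum>d\<in>UNIV. M a d * Y d) = K a * (\<Sum>i\<in>UNIV. (\<Sum>d\<in>UNIV. M i d * Y d) * l i)"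
      by (rule delta_trick[OF Kl, of "\<lambda>i. \<Sum>d\<in>UNIV. M i d * Y d"])
         (use H2[OF _ Y] in \<open>simp add: mult.commute\<close>)
    also have "(\<Sum>i\<in>UNIV. (\<Sum>d\<in>UNIV. M i d * Y d) * l i) = (\<Sum>d\<in>UNIV. \<mu> d * Y d)"
      unfolding \<mu>_def by (simp add: sum_3 algebra_simps)
    finally show ?thesis .
  qed
  have D: "M a d = K a * \<mu> d + \<nu> a * K d" for a d
  proof -
    have "M a d - K a * \<mu> d = K d * (\<Sum>j\<in>UNIV. (M a j - K a * \<mu> j) * l j)"
    proof (rule delta_trick[OF Kl, of "\<lambda>j. M a j - K a * \<mu> j"])
      fix Z assume Z: "(\<Sum>d\<in>UNIV. K d * Z d) = 0"
      have "(\<Sum>d\<in>UNIV. (M a d - K a * \<mu> d) * Z d) = (\<Sum>d\<in>UNIV. M a d * Z d) - K a * (\<Sum>d\<in>UNIV. \<mu> d * Z d)"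
        by (simp add: sum_3 algebra_simps)
      then show "(\<Sum>d\<in>UNIV. (M a d - K a * \<mu> d) * Z d) = 0" using step1[OF Z, of a] by simp
    qed
    then show ?thesis unfolding \<nu>_def by (simp add: algebra_simps)
  qed
  define \<mu>u where "\<mu>u c = (\<Sum>d\<in>UNIV. \<mu> d * Gm d c)" for c
  have Bdec: "B a c = K a * \<mu>u c + \<nu> a * k c" for a c
    unfolding Bdef D \<mu>u_def kdef by (simp add: sum_3 algebra_simps)
  have K\<mu>0: "(\<Sum>a\<in>UNIV. K a * \<mu>u a) = (\<Sum>i\<in>UNIV. l i * (\<Sum>d\<in>UNIV. M i d * k d))"
    unfolding \<mu>u_def \<mu>_def kdef by (simp add: sum_3 algebra_simps Gsym)
  have K\<mu>: "(\<Sum>a\<in>UNIV. K a * \<mu>u a) = 0" unfolding K\<mu>0 H1 by simp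
  have th: "(\<Sum>a\<in>UNIV. B a a) = (\<Sum>a\<in>UNIV. \<nu> a * k a)"
  proof -
    have "(\<Sum>a\<in>UNIV. B a a) = (\<Sum>a\<in>UNIV. K a * \<mu>u a) + (\<Sum>a\<in>UNIV. \<nu> a * k a)"
      unfolding Bdec by (simp add: sum.distrib)
    then show ?thesis using K\<mu> by simp
  qed
  have "(\<Sum>a\<in>UNIV. k a * B a c) = (\<Sum>a\<in>UNIV. K a * k a) * \<mu>u c + (\<Sum>a\<in>UNIV. \<nu> a * k a) * k c"
    unfolding Bdec by (simp add: sum_3 algebra_simps)
  also have "(\<Sum>a\<in>UNIV. K a * k a) = 0" using Kk by simp
  finally show "(\<Sum>a\<in>UNIV. k a * B a c) = (\<Sum>a\<in>UNIV. B a a) * k c" using th by simp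
  have "(\<Sum>a\<in>UNIV. \<Sum>c\<in>UNIV. B a c * B c a) = (\<Sum>a\<in>UNIV. K a * \<mu>u a)^2
      + 2 * (\<Sum>a\<in>UNIV. K a * k a) * (\<Sum>a\<in>UNIV. \<nu> a * \<mu>u a) + (\<Sum>a\<in>UNIV. \<nu> a * k a)^2"
    unfolding Bdec by (simp add: sum_3 power2_eq_square algebra_simps)
  then show "(\<Sum>a\<in>UNIV. \<Sum>c\<in>UNIV. B a c * B c a) = (\<Sum>a\<in>UNIV. B a a)^2"
    using K\<mu> Kk th by simp
qed

lemma pair_real:
  fixes Rl :: "3 \<Rightarrow> 3 \<Rightarrow> 3 \<Rightarrow> 3 \<Rightarrow> real"
  assumes as: "\<And>a b d c. Rl a b d c = - Rl b a d c"
    and S: "\<And>a b d c. Rl a b d c = - Rl a b c d"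
    and Bi: "\<And>a b d c. Rl a b d c + Rl b d a c + Rl d a b c = 0"
  shows "Rl a b c d = Rl c d a b"
  using Bi[of a b c d] Bi[of a b d c] Bi[of a c b d] Bi[of a c d b] Bi[of a d b c] Bi[of a d c b] Bi[of b a c d] Bi[of b a d c] Bi[of b c a d] Bi[of b c d a] Bi[of b d a c] Bi[of b d c a] Bi[of c a b d] Bi[of c a d b] Bi[of c b a d] Bi[of c b d a] Bi[of c d a b] Bi[of c d b a] Bi[of d a b c] Bi[of d a c b] Bi[of d b a c] Bi[of d b c a] Bi[of d c a b] Bi[of d c b a]
    as[of a b c d] S[of a b c d] as[of a b d c] S[of a b d c] as[of a c b d] S[of a c b d] as[of a c d b] S[of a c d b] as[of a d b c] S[of a d b c] as[of a d c b] S[of a d c b] as[of b a c d] S[of b a c d] as[of b a d c] S[of b a d c] as[of b c a d] S[of b c a d] as[of b c d a] S[of b c d a] as[of b d a c] S[of b d a c] as[of b d c a] S[of b d c a] as[of c a b d] S[of c a b d] as[of c a d b] S[of c a d b] as[of c b a d] S[of c b a d] as[of c b d a] S[of c b d a] as[of c d a b] S[of c d a b] as[of c d b a] S[of c d b a] as[of d a b c] S[of d a b c] as[of d a c b] S[of d a c b] as[of d b a c] S[of d b a c] as[of d b c a] S[of d b c a] as[of d c a b] S[of d c a b] as[of d c b a] S[of d c b a]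
  by linarith

lemma alg2:
  fixes R Rl :: "3 \<Rightarrow> 3 \<Rightarrow> 3 \<Rightarrow> 3 \<Rightarrow> complex" and Gm :: "3 \<Rightarrow> 3 \<Rightarrow> complex" and K k l :: "3 \<Rightarrow> complex"
  assumes Rdef: "\<And>a b d c. R a b d c = (\<Sum>f\<in>UNIV. Rl a b d f * Gm f c)"
    and pair: "\<And>a b c d. Rl a b c d = Rl c d a b"
    and S: "\<And>a b d c. Rl a b d c = - Rl a b c d"
    and kdef: "\<And>c. k c = (\<Sum>d\<in>UNIV. K d * Gm d c)"
    and Gsym: "\<And>a b. Gm a b = Gm b a"
    and Kl: "(\<Sum>d\<in>UNIV. K d * l d) = 1"
    and A: "\<And>a b Z. (\<Sum>d\<in>UNIV. K d * Z d) = 0 \<Longrightarrow> (\<Sum>c\<in>UNIV. (\<Sum>d\<in>UNIV. Rl a b d c * k d) * Z c) = 0"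
  shows "(\<Sum>c\<in>UNIV. k c * (\<Sum>e\<in>UNIV. R c e a e)) * K b = (\<Sum>c\<in>UNIV. k c * (\<Sum>e\<in>UNIV. R c e b e)) * K a"
proof -
  define P where "P a b c = (\<Sum>d\<in>UNIV. Rl a b d c * k d)" for a b c
  define F where "F a b = (\<Sum>c\<in>UNIV. P a b c * l c)" for a b
  have E1: "P a b c = K c * F a b" for a b c
    unfolding F_def by (rule delta_trick[OF Kl]) (use A in \<open>simp add: P_def\<close>)
  have Ric: "(\<Sum>c\<in>UNIV. k c * (\<Sum>e\<in>UNIV. R c e a e)) = (\<Sum>f\<in>UNIV. F a f * k f)" for a
  proof -
    have "(\<Sum>c\<in>UNIV. k c * (\<Sum>e\<in>UNIV. R c e a e)) = (\<Sum>e\<in>UNIV. \<Sum>f\<in>UNIV. Gm f e * P a f e)"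
      unfolding Rdef P_def by (simp add: sum_3 algebra_simps pair)
    also have "\<dots> = (\<Sum>e\<in>UNIV. \<Sum>f\<in>UNIV. Gm f e * (K e * F a f))" by (simp add: E1)
    also have "\<dots> = (\<Sum>f\<in>UNIV. F a f * k f)" unfolding kdef by (simp add: sum_3 algebra_simps Gsym)
    finally show ?thesis .
  qed
  define \<rho> where "\<rho> a = (\<Sum>f\<in>UNIV. F a f * k f)" for a
  have T: "(\<Sum>f\<in>UNIV. k f * P a f c) = - (\<Sum>d\<in>UNIV. k d * P d c a)" for a c
  proof -
    have pS: "\<And>f d. Rl a f d c = - Rl d c f a" using pair S by metis
    have "(\<Sum>f\<in>UNIV. k f * P a f c) = (\<Sum>f\<in>UNIV. \<Sum>d\<in>UNIV. k f * k d * Rl a f d c)"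
      unfolding P_def by (simp add: sum_distrib_left algebra_simps)
    also have "\<dots> = (\<Sum>f\<in>UNIV. \<Sum>d\<in>UNIV. k f * k d * (- Rl d c f a))" by (simp only: pS)
    also have "\<dots> = - (\<Sum>d\<in>UNIV. k d * P d c a)" unfolding P_def by (simp add: sum_3 algebra_simps)
    finally show ?thesis .
  qed
  have Z\<rho>: "(\<Sum>a\<in>UNIV. \<rho> a * Z a) = 0" if Z: "(\<Sum>d\<in>UNIV. K d * Z d) = 0" for Z
  proof -
    have "(\<Sum>a\<in>UNIV. \<rho> a * Z a) = (\<Sum>a\<in>UNIV. Z a * (\<Sum>c\<in>UNIV. l c * (\<Sum>f\<in>UNIV. k f * P a f c)))"
      unfolding \<rho>_def F_def by (simp add: sum_3 algebra_simps)
    also have "\<dots> = (\<Sum>a\<in>UNIV. Z a * (\<Sum>c\<in>UNIV. l c * (- (\<Sum>d\<in>UNIV. k d * P d c a))))" by (simp only: T)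
    also have "\<dots> = - (\<Sum>d\<in>UNIV. \<Sum>c\<in>UNIV. k d * l c * F d c) * (\<Sum>a\<in>UNIV. K a * Z a)"
      unfolding E1 by (simp add: sum_3 algebra_simps)
    also have "\<dots> = 0" using Z by simp
    finally show ?thesis .
  qed
  have \<rho>K: "\<rho> a = K a * (\<Sum>d\<in>UNIV. \<rho> d * l d)" for a
    by (rule delta_trick[OF Kl]) (rule Z\<rho>)
  show ?thesis unfolding Ric \<rho>_def[symmetric] using \<rho>K[of a] \<rho>K[of b] by (simp add: algebra_simps)
qed

lemma smul_bl: "bounded_linear (\<lambda>c::complex. c *s (v::complex^3))"
proof -
  have "linear (\<lambda>c::complex. c *s (v::complex^3))"
    by (simp add: linear_iff vec_eq_iff vector_scalar_mult_def algebra_simps)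
  then show ?thesis using linear_conv_bounded_linear by blast
qed

lemma ofreal_comp_bl: "bounded_linear (\<lambda>M::real^3^3. complex_of_real (M $ a $ b))"
  using bounded_linear_compose[OF bounded_linear_of_real[where 'a=complex] bl_comp2[of a b]] by simp

locale geo2 = geo +
  fixes k :: "pt \<Rightarrow> complex^3"
  assumes ng: "null_generator U g k"
begin

lemma k_smooth: "smooth_on U k" using ng unfolding null_generator_def by simp
lemma k_nz: "y \<in> U \<Longrightarrow> k y \<noteq> 0" using ng unfolding null_generator_def by simp
lemma k_null: "y \<in> U \<Longrightarrow> gC g y (k y) (k y) = 0" using ng unfolding null_generator_def by simp

lemma field_Ck: "smooth_on U V \<Longrightarrow> Ck_on n U (\<lambda>y. V y $ c)"
  using Ck_on_linear[OF U_open bounded_linear_vec_nth smooth_Ck] by blast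

lemma kc_Ck: "Ck_on n U (\<lambda>y. k y $ c)" using field_Ck[OF k_smooth] .

lemma k_diff: "x \<in> U \<Longrightarrow> (\<lambda>y. k y $ c) differentiable at x"
  using Ck2_diff[OF U_open kc_Ck] .

lemma k_pd_diff: "x \<in> U \<Longrightarrow> pd i (\<lambda>y. k y $ c) differentiable at x"
  using Ck2_pd_diff[OF U_open kc_Ck] .

lemma field_diff: "smooth_on U V \<Longrightarrow> x \<in> U \<Longrightarrow> (\<lambda>y. V y $ c) differentiable at x"
  using Ck2_diff[OF U_open field_Ck] by blast

lemma gk_Ck: "Ck_on n U (\<lambda>y. gC g y (k y) w)"
proof -
  have og: "Ck_on n U (\<lambda>y. complex_of_real (g y $ a $ b))" for a b
    using Ck_on_linear[OF U_open ofreal_comp_bl smooth_Ck[OF g_smooth]] .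
  have t: "Ck_on n U (\<lambda>y. complex_of_real (g y $ a $ b) * k y $ a * w $ b)" for a b
    using Ck_on_bilinear[OF U_open bounded_bilinear_mult
        Ck_on_bilinear[OF U_open bounded_bilinear_mult og kc_Ck] Ck_on_const] .
  have "Ck_on n U (\<lambda>y. \<Sum>b\<in>UNIV. complex_of_real (g y $ a $ b) * k y $ a * w $ b)" for a
    using Ck_on_sum[OF U_open finite_class.finite_UNIV, of n "\<lambda>b y. complex_of_real (g y $ a $ b) * k y $ a * w $ b"] t by simp
  then have "Ck_on n U (\<lambda>y. \<Sum>a\<in>UNIV. \<Sum>b\<in>UNIV. complex_of_real (g y $ a $ b) * k y $ a * w $ b)"
    using Ck_on_sum[OF U_open finite_class.finite_UNIV, of n "\<lambda>a y. \<Sum>b\<in>UNIV. complex_of_real (g y $ a $ b) * k y $ a * w $ b"] by simp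
  then show ?thesis unfolding gC_def .
qed

definition Yf :: "complex^3 \<Rightarrow> complex^3 \<Rightarrow> pt \<Rightarrow> complex^3" where
  "Yf v l0 y = gC g y (k y) l0 *s v - gC g y (k y) v *s l0"

lemma Yf_smooth: "smooth_on U (Yf v l0)"
  unfolding smooth_on_def
proof
  fix n
  have "Ck_on n U (\<lambda>y. (\<lambda>c. c *s v) (gC g y (k y) l0) + (\<lambda>c. c *s (- l0)) (gC g y (k y) v))"
    by (intro Ck_on_add[OF U_open] Ck_on_linear[OF U_open smul_bl] gk_Ck)
  moreover have "(\<lambda>y. (\<lambda>c. c *s v) (gC g y (k y) l0) + (\<lambda>c. c *s (- l0)) (gC g y (k y) v)) = Yf v l0"
    by (rule ext) (simp add: Yf_def vec_eq_iff vector_scalar_mult_def)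
  ultimately show "Ck_on n U (Yf v l0)" by simp
qed

lemma gC_sym: "y \<in> U \<Longrightarrow> gC g y u v = gC g y v u"
  unfolding gC_def by (simp add: sum_3 algebra_simps g_sym)

lemma gC_lin: "gC g y (a *s u - b *s w) v = a * gC g y u v - b * gC g y w v"
  unfolding gC_def by (simp add: sum_3 algebra_simps)

lemma gC_smul: "gC g y (a *s u) v = a * gC g y u v"
  unfolding gC_def by (simp add: sum_3 algebra_simps)

lemma Yf_perp: "y \<in> U \<Longrightarrow> gC g y (Yf v l0 y) (k y) = 0"
  unfolding Yf_def gC_lin using gC_sym[of y v "k y"] gC_sym[of y l0 "k y"] by simp

lemma Yf_at: "gC g x (k x) l0 = 1 \<Longrightarrow> gC g x (k x) v = 0 \<Longrightarrow> Yf v l0 x = v"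
  unfolding Yf_def by (simp add: vec_eq_iff vector_scalar_mult_def)

definition Kv :: "pt \<Rightarrow> 3 \<Rightarrow> complex" where
  "Kv y b = (\<Sum>a\<in>UNIV. complex_of_real (g y $ a $ b) * k y $ a)"

lemma gC_Kv: "gC g y (k y) w = (\<Sum>b\<in>UNIV. Kv y b * w $ b)"
  unfolding gC_def Kv_def by (simp add: sum_3 algebra_simps)

lemma k_from_Kv: "y \<in> U \<Longrightarrow> k y $ c = (\<Sum>d\<in>UNIV. Kv y d * of_real (ginv g y $ d $ c))"
proof -
  assume y: "y \<in> U"
  have "(\<Sum>d\<in>UNIV. Kv y d * of_real (ginv g y $ d $ c))
      = (\<Sum>a\<in>UNIV. k y $ a * of_real (\<Sum>d\<in>UNIV. g y $ a $ d * ginv g y $ d $ c))"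
    unfolding Kv_def by (simp add: sum_3 algebra_simps)
  also have "\<dots> = (\<Sum>a\<in>UNIV. k y $ a * of_real (if a = c then 1 else 0))"
    by (simp only: G_right[OF y])
  also have "\<dots> = k y $ c" by (simp add: if_distrib cong: if_cong)
  finally show ?thesis by simp
qed

lemma l0_ex: "y \<in> U \<Longrightarrow> \<exists>l0. gC g y (k y) l0 = 1"
proof -
  assume y: "y \<in> U"
  have "\<exists>i. Kv y i \<noteq> 0"
  proof (rule ccontr)
    assume "\<not> (\<exists>i. Kv y i \<noteq> 0)"
    then have "\<And>c. k y $ c = 0" using k_from_Kv[OF y] by simp
    then have "k y = 0" by (simp add: vec_eq_iff)
    then show False using k_nz[OF y] by simp
  qed
  then obtain i where i: "Kv y i \<noteq> 0" by blast
  have "gC g y (k y) (axis i (1 / Kv y i)) = 1"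
    unfolding gC_Kv using i by (simp add: axis_def if_distrib cong: if_cong)
  then show ?thesis by blast
qed

lemma covD_nab: "covD g X Y x = (\<chi> c. \<Sum>a\<in>UNIV. X x $ a * nab a Y x $ c)"
  by (simp add: covD_def nab_def)

lemma covD_axis: "covD g (complexify (\<lambda>_. axis a 1)) V x = nab a V x"
  using exhaust_3[of a] by (auto simp: covD_nab complexify_def axis_def vec_eq_iff sum_3)

end

context geo2 begin

lemma nab_k_fun: "(\<lambda>y. nab a k y $ c) = (\<lambda>y. pd a (\<lambda>y. k y $ c) y + (\<Sum>b\<in>UNIV. of_real (Chr g y c a b) * k y $ b))"
  by (simp add: nab_comp)

lemma B_diff: "x \<in> U \<Longrightarrow> (\<lambda>y. nab a k y $ c) differentiable at x"
proof -
  assume x: "x \<in> U"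
  have m: "(\<lambda>y. complex_of_real (Chr g y c a b) * k y $ b) differentiable at x" for b
    using differentiable_mult[OF Cd[OF x] k_diff[OF x]] .
  have "(\<lambda>y. \<Sum>b\<in>UNIV. complex_of_real (Chr g y c a b) * k y $ b) differentiable at x"
    using m by (intro differentiable_sum) auto
  then show ?thesis unfolding nab_k_fun using k_pd_diff[OF x] by (intro differentiable_add) auto
qed

lemma H1: "z \<in> U \<Longrightarrow> gC g z (nab a k z) (k z) = 0"
proof -
  assume z: "z \<in> U"
  have "pd a (\<lambda>y. gC g y (k y) (k y)) z = 0"
    by (rule pd_cong_zero[OF U_open z]) (simp add: k_null)
  then have "gC g z (nab a k z) (k z) + gC g z (k z) (nab a k z) = 0"
    using metric_L[OF z k_diff[OF z] k_diff[OF z], of a] by simp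
  then show ?thesis using gC_sym[OF z, of "k z" "nab a k z"] by simp
qed

lemma gC_sumleft:
  fixes X :: "complex^3" and W :: "3 \<Rightarrow> complex^3"
  shows "gC g z (\<chi> c. \<Sum>a\<in>UNIV. X $ a * W a $ c) v = (\<Sum>a\<in>UNIV. X $ a * gC g z (W a) v)"
  unfolding gC_def by (simp add: sum_3 algebra_simps)

lemma sec_N_k: "sec_N U k k"
  unfolding sec_N_def using k_smooth by (metis vector_smult_lid)

lemma cogeo_H2:
  assumes cg: "co_geodetic U g k" and z: "z \<in> U"
    and X: "gC g z (k z) X = 0" and Y: "gC g z (k z) Y = 0"
  shows "(\<Sum>a\<in>UNIV. X $ a * gC g z (nab a k z) Y) = 0"
proof -
  obtain l0 where l0: "gC g z (k z) l0 = 1" using l0_ex[OF z] by blast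
  define Xf where "Xf = Yf X l0"
  define Yg where "Yg = Yf Y l0"
  have sX: "sec_Nperp U g k Xf" unfolding sec_Nperp_def Xf_def using Yf_smooth Yf_perp by blast
  have sY: "sec_Nperp U g k Yg" unfolding sec_Nperp_def Yg_def using Yf_smooth Yf_perp by blast
  have c0: "gC g z (covD g Xf Yg z) (k z) = 0"
    using cg sX sY sec_N_k z unfolding co_geodetic_def by blast
  have Xz: "Xf z = X" unfolding Xf_def by (rule Yf_at[OF l0 X])
  have Yz: "Yg z = Y" unfolding Yg_def by (rule Yf_at[OF l0 Y])
  have Ygd: "\<And>c. (\<lambda>y. Yg y $ c) differentiable at z" unfolding Yg_def using field_diff[OF Yf_smooth z] .
  have each: "gC g z (nab a Yg z) (k z) = - gC g z (nab a k z) Y" for a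
  proof -
    have "pd a (\<lambda>y. gC g y (Yg y) (k y)) z = 0"
      by (rule pd_cong_zero[OF U_open z]) (simp add: Yg_def Yf_perp)
    then have "gC g z (nab a Yg z) (k z) + gC g z (Yg z) (nab a k z) = 0"
      using metric_L[OF z Ygd k_diff[OF z], of a] by simp
    then show ?thesis using gC_sym[OF z, of Y "nab a k z"] Yz by (simp add: eq_neg_iff_add_eq_0)
  qed
  have "0 = (\<Sum>a\<in>UNIV. X $ a * gC g z (nab a Yg z) (k z))"
    using c0 unfolding covD_nab Xz gC_sumleft by simp
  also have "\<dots> = - (\<Sum>a\<in>UNIV. X $ a * gC g z (nab a k z) Y)"
    unfolding each by (simp add: sum_negf)
  finally show ?thesis by simp
qed

lemma cogeo_pointwise:
  assumes cg: "co_geodetic U g k" and z: "z \<in> U"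
  shows "(\<Sum>a\<in>UNIV. k z $ a * nab a k z $ c) = (\<Sum>a\<in>UNIV. nab a k z $ a) * k z $ c"
    and "(\<Sum>a\<in>UNIV. \<Sum>c\<in>UNIV. nab a k z $ c * nab c k z $ a) = (\<Sum>a\<in>UNIV. nab a k z $ a)^2"
proof -
  obtain l0 where l0: "gC g z (k z) l0 = 1" using l0_ex[OF z] by blast
  define M where "M a d = (\<Sum>c\<in>UNIV. complex_of_real (g z $ c $ d) * nab a k z $ c)" for a d
  define Gm where "Gm d c = complex_of_real (ginv g z $ d $ c)" for d c
  have Bdef: "nab a k z $ c = (\<Sum>d\<in>UNIV. M a d * Gm d c)" for a c
  proof -
    have "(\<Sum>d\<in>UNIV. M a d * Gm d c) = (\<Sum>e\<in>UNIV. nab a k z $ e * of_real (\<Sum>d\<in>UNIV. g z $ e $ d * ginv g z $ d $ c))"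
      unfolding M_def Gm_def by (simp add: sum_3 algebra_simps)
    also have "\<dots> = (\<Sum>e\<in>UNIV. nab a k z $ e * of_real (if e = c then 1 else 0))"
      by (simp only: G_right[OF z])
    also have "\<dots> = nab a k z $ c" by (simp add: if_distrib cong: if_cong)
    finally show ?thesis by simp
  qed
  have kdef: "k z $ c = (\<Sum>d\<in>UNIV. Kv z d * Gm d c)" for c
    unfolding Gm_def using k_from_Kv[OF z] .
  have Gsym: "Gm a b = Gm b a" for a b unfolding Gm_def using G_sym[OF z] by simp
  have Kk: "(\<Sum>d\<in>UNIV. Kv z d * k z $ d) = 0" using k_null[OF z] unfolding gC_Kv .
  have Kl: "(\<Sum>d\<in>UNIV. Kv z d * l0 $ d) = 1" using l0 unfolding gC_Kv .
  have gM: "gC g z (nab a k z) w = (\<Sum>d\<in>UNIV. M a d * w $ d)" for a w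
    unfolding gC_def M_def by (simp add: sum_3 algebra_simps)
  have H1': "(\<Sum>d\<in>UNIV. M a d * k z $ d) = 0" for a using H1[OF z, of a] unfolding gM .
  have H2': "(\<Sum>a\<in>UNIV. X a * (\<Sum>d\<in>UNIV. M a d * Y d)) = 0"
    if "(\<Sum>d\<in>UNIV. Kv z d * X d) = 0" "(\<Sum>d\<in>UNIV. Kv z d * Y d) = 0" for X Y
  proof -
    have "gC g z (k z) (vec_lambda X) = 0" "gC g z (k z) (vec_lambda Y) = 0"
      using that unfolding gC_Kv by simp_all
    from cogeo_H2[OF cg z this] show ?thesis unfolding gM by simp
  qed
  note r = alg1[where B="\<lambda>a c. nab a k z $ c" and M=M and Gm=Gm and K="Kv z" and k="\<lambda>c. k z $ c" and l="\<lambda>d. l0 $ d",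
      OF Bdef kdef Gsym Kk Kl H1' H2']
  show "(\<Sum>a\<in>UNIV. k z $ a * nab a k z $ c) = (\<Sum>a\<in>UNIV. nab a k z $ a) * k z $ c" using r(1) .
  show "(\<Sum>a\<in>UNIV. \<Sum>c\<in>UNIV. nab a k z $ c * nab c k z $ a) = (\<Sum>a\<in>UNIV. nab a k z $ a)^2" using r(2) .
qed

end

context geo2 begin

lemma part1:
  assumes cg: "co_geodetic U g k" and x: "x \<in> U"
  shows "(\<Sum>a\<in>UNIV. \<Sum>b\<in>UNIV. k x $ a * k x $ b * PhiC g x a b) = 0"
proof -
  define \<theta> where "\<theta> y = (\<Sum>c\<in>UNIV. nab c k y $ c)" for y
  define dk where "dk a c = pd a (\<lambda>y. k y $ c) x" for a c
  define Gc where "Gc c a e = complex_of_real (Chr g x c a e)" for c a e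
  define Bx where "Bx a c = nab a k x $ c" for a c
  have Bd: "(\<lambda>y. nab a k y $ c) differentiable at x" for a c using B_diff[OF x] .
  have \<theta>d: "\<theta> differentiable at x"
    unfolding \<theta>_def using Bd by (intro differentiable_sum) auto
  have P1: "(\<Sum>a\<in>UNIV. k y $ a * nab a k y $ c) = \<theta> y * k y $ c" if "y \<in> U" for y c
    unfolding \<theta>_def using cogeo_pointwise(1)[OF cg that] .
  have P2: "(\<Sum>a\<in>UNIV. \<Sum>c\<in>UNIV. Bx a c * Bx c a) = \<theta> x ^ 2"
    unfolding \<theta>_def Bx_def using cogeo_pointwise(2)[OF cg x] .
  have R: "(\<Sum>d\<in>UNIV. of_real (Riem g x a c d c) * k x $ d) =
      (pd a (\<lambda>y. nab c k y $ c) x + (\<Sum>e\<in>UNIV. Gc c a e * Bx c e))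
    - (pd c (\<lambda>y. nab a k y $ c) x + (\<Sum>e\<in>UNIV. Gc c c e * Bx a e))" for a c
    using ricci[OF x kc_Ck, of a c c] unfolding nab_comp[of a "nab c k" x c] nab_comp[of c "nab a k" x c]
      Gc_def Bx_def .
  have pd\<theta>: "pd a \<theta> x = (\<Sum>c\<in>UNIV. pd a (\<lambda>y. nab c k y $ c) x)" for a
    unfolding \<theta>_def using pd_sum[of UNIV "\<lambda>c y. nab c k y $ c"] Bd by simp
  have W: "(\<Sum>a\<in>UNIV. k x $ a * pd c (\<lambda>y. nab a k y $ c) x)
      = pd c \<theta> x * k x $ c + \<theta> x * dk c c - (\<Sum>a\<in>UNIV. dk c a * Bx a c)" for c
  proof -
    have m: "(\<lambda>y. k y $ a * nab a k y $ c) differentiable at x" for a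
      using differentiable_mult[OF k_diff[OF x] Bd] .
    have "pd c (\<lambda>y. \<Sum>a\<in>UNIV. k y $ a * nab a k y $ c) x = (\<Sum>a\<in>UNIV. pd c (\<lambda>y. k y $ a * nab a k y $ c) x)"
      using pd_sum[of UNIV "\<lambda>a y. k y $ a * nab a k y $ c"] m by simp
    also have "\<dots> = (\<Sum>a\<in>UNIV. dk c a * Bx a c + k x $ a * pd c (\<lambda>y. nab a k y $ c) x)"
      unfolding dk_def Bx_def using pd_mult[OF k_diff[OF x] Bd] by simp
    finally have e1: "pd c (\<lambda>y. \<Sum>a\<in>UNIV. k y $ a * nab a k y $ c) x
       = (\<Sum>a\<in>UNIV. dk c a * Bx a c) + (\<Sum>a\<in>UNIV. k x $ a * pd c (\<lambda>y. nab a k y $ c) x)"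
      by (simp add: sum.distrib)
    have "pd c (\<lambda>y. \<Sum>a\<in>UNIV. k y $ a * nab a k y $ c) x = pd c (\<lambda>y. \<theta> y * k y $ c) x"
      by (rule pd_cong[OF U_open x]) (simp add: P1)
    also have "\<dots> = pd c \<theta> x * k x $ c + \<theta> x * dk c c"
      unfolding dk_def using pd_mult[OF \<theta>d k_diff[OF x]] by simp
    finally show ?thesis using e1 by (simp add: algebra_simps)
  qed
  have Bxe: "Bx a c = dk a c + (\<Sum>e\<in>UNIV. Gc c a e * k x $ e)" for a c
    unfolding Bx_def dk_def Gc_def by (simp add: nab_comp)
  have Gs: "Gc c a e = Gc c e a" for c a e unfolding Gc_def using Chr_sym[OF x] by simp
  have S0: "(\<Sum>a\<in>UNIV. \<Sum>b\<in>UNIV. k x $ a * k x $ b * PhiC g x a b)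
      = (\<Sum>a\<in>UNIV. \<Sum>b\<in>UNIV. k x $ a * k x $ b * of_real (Ric g x a b)) - of_real (scal g x) / 3 * gC g x (k x) (k x)"
    unfolding PhiC_def Phi_def gC_def by (simp add: sum_3 algebra_simps)
  have S1: "(\<Sum>a\<in>UNIV. \<Sum>b\<in>UNIV. k x $ a * k x $ b * of_real (Ric g x a b))
      = (\<Sum>a\<in>UNIV. k x $ a * (\<Sum>c\<in>UNIV. (\<Sum>d\<in>UNIV. of_real (Riem g x a c d c) * k x $ d)))"
    unfolding Ric_def by (simp add: sum_3 algebra_simps)
  have S2: "(\<Sum>a\<in>UNIV. k x $ a * (\<Sum>c\<in>UNIV. (\<Sum>d\<in>UNIV. of_real (Riem g x a c d c) * k x $ d)))
     = (\<Sum>a\<in>UNIV. k x $ a * (\<Sum>c\<in>UNIV. pd a (\<lambda>y. nab c k y $ c) x))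
     + (\<Sum>a\<in>UNIV. k x $ a * (\<Sum>c\<in>UNIV. \<Sum>e\<in>UNIV. Gc c a e * Bx c e))
     - (\<Sum>c\<in>UNIV. \<Sum>a\<in>UNIV. k x $ a * pd c (\<lambda>y. nab a k y $ c) x)
     - (\<Sum>a\<in>UNIV. k x $ a * (\<Sum>c\<in>UNIV. \<Sum>e\<in>UNIV. Gc c c e * Bx a e))"
    unfolding R by (simp add: sum_3 algebra_simps)
  have G1: "(\<Sum>a\<in>UNIV. k x $ a * (\<Sum>c\<in>UNIV. pd a (\<lambda>y. nab c k y $ c) x)) = (\<Sum>a\<in>UNIV. k x $ a * pd a \<theta> x)"
    unfolding pd\<theta> ..
  have Gk: "(\<Sum>a\<in>UNIV. Gc c e a * k x $ a) = Bx e c - dk e c" for c e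
    unfolding Bxe by simp
  have G3: "(\<Sum>a\<in>UNIV. k x $ a * (\<Sum>c\<in>UNIV. \<Sum>e\<in>UNIV. Gc c a e * Bx c e))
      = (\<Sum>c\<in>UNIV. \<Sum>e\<in>UNIV. (Bx e c - dk e c) * Bx c e)"
  proof -
    have "(\<Sum>a\<in>UNIV. k x $ a * (\<Sum>c\<in>UNIV. \<Sum>e\<in>UNIV. Gc c a e * Bx c e))
      = (\<Sum>c\<in>UNIV. \<Sum>e\<in>UNIV. (\<Sum>a\<in>UNIV. Gc c e a * k x $ a) * Bx c e)"
      by (simp add: sum_3 algebra_simps Gs)
    then show ?thesis unfolding Gk .
  qed
  have G4: "(\<Sum>a\<in>UNIV. k x $ a * (\<Sum>c\<in>UNIV. \<Sum>e\<in>UNIV. Gc c c e * Bx a e))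
      = (\<Sum>e\<in>UNIV. (\<Sum>c\<in>UNIV. Gc c c e) * (\<theta> x * k x $ e))"
  proof -
    have "(\<Sum>a\<in>UNIV. k x $ a * (\<Sum>c\<in>UNIV. \<Sum>e\<in>UNIV. Gc c c e * Bx a e))
      = (\<Sum>e\<in>UNIV. (\<Sum>c\<in>UNIV. Gc c c e) * (\<Sum>a\<in>UNIV. k x $ a * Bx a e))"
      by (simp add: sum_3 algebra_simps)
    then show ?thesis unfolding Bx_def P1[OF x] .
  qed
  have th2: "\<theta> x = (\<Sum>c\<in>UNIV. dk c c) + (\<Sum>e\<in>UNIV. (\<Sum>c\<in>UNIV. Gc c c e) * k x $ e)"
    unfolding \<theta>_def Bx_def[symmetric] Bxe by (simp add: sum_3 algebra_simps)
  have fin: "(\<Sum>a\<in>UNIV. k x $ a * pd a \<theta> x) + (\<Sum>c\<in>UNIV. \<Sum>e\<in>UNIV. (Bx e c - dk e c) * Bx c e)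
     - (\<Sum>c\<in>UNIV. pd c \<theta> x * k x $ c + \<theta> x * dk c c - (\<Sum>a\<in>UNIV. dk c a * Bx a c))
     - (\<Sum>e\<in>UNIV. (\<Sum>c\<in>UNIV. Gc c c e) * (\<theta> x * k x $ e))
     = (\<Sum>a\<in>UNIV. \<Sum>c\<in>UNIV. Bx a c * Bx c a) - \<theta> x * ((\<Sum>c\<in>UNIV. dk c c) + (\<Sum>e\<in>UNIV. (\<Sum>c\<in>UNIV. Gc c c e) * k x $ e))"
    by (simp add: sum_3 algebra_simps)
  have "(\<Sum>a\<in>UNIV. \<Sum>b\<in>UNIV. k x $ a * k x $ b * PhiC g x a b)
     = (\<Sum>a\<in>UNIV. \<Sum>c\<in>UNIV. Bx a c * Bx c a) - \<theta> x * ((\<Sum>c\<in>UNIV. dk c c) + (\<Sum>e\<in>UNIV. (\<Sum>c\<in>UNIV. Gc c c e) * k x $ e))"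
    unfolding S0 k_null[OF x] S1 S2 G1 G3 G4 W[symmetric] fin[symmetric]
    by (simp add: sum_3 algebra_simps)
  also have "\<dots> = 0" unfolding P2 th2[symmetric] by (simp add: power2_eq_square)
  finally show ?thesis .
qed

end

context geo2 begin

lemma par_beta:
  assumes par: "parallel_ns U g k" and z: "z \<in> U"
  shows "\<exists>\<beta>. nab a k z = \<beta> *s k z"
proof -
  have sm: "smooth_on U (\<lambda>_. axis a (1::real) :: real^3)" unfolding smooth_on_def using Ck_on_const by blast
  have "\<exists>c. covD g (complexify (\<lambda>_. axis a 1)) k z = c *s k z"
    using par sec_N_k sm z unfolding parallel_ns_def by blast
  then show ?thesis unfolding covD_axis .
qed

lemma gC_diffl: "gC g z (u - w) v = gC g z u v - gC g z w v"
  unfolding gC_def by (simp add: sum_3 algebra_simps)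

lemma par_A:
  assumes par: "parallel_ns U g k" and x: "x \<in> U" and Z: "gC g x (k x) Z0 = 0"
  shows "gC g x (\<chi> c. \<Sum>d\<in>UNIV. of_real (Riem g x a b d c) * k x $ d) Z0 = 0"
proof -
  obtain l0 where l0: "gC g x (k x) l0 = 1" using l0_ex[OF x] by blast
  define Y where "Y = Yf Z0 l0"
  have Yx: "Y x = Z0" unfolding Y_def by (rule Yf_at[OF l0 Z])
  have Yd: "\<And>c. (\<lambda>y. Y y $ c) differentiable at x" unfolding Y_def using field_diff[OF Yf_smooth x] .
  have perp: "gC g y (Y y) (k y) = 0" if "y \<in> U" for y unfolding Y_def using Yf_perp[OF that] .
  have kY: "gC g x (nab a' k x) (Y x) + gC g x (k x) (nab a' Y x) = 0" for a'
  proof -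
    have "pd a' (\<lambda>y. gC g y (k y) (Y y)) x = 0"
      by (rule pd_cong_zero[OF U_open x]) (simp add: gC_sym perp)
    then show ?thesis using metric_L[OF x k_diff[OF x] Yd, of a'] by simp
  qed
  have one: "gC g x (nab a' (nab b' k) x) Z0 = 0" for a' b'
  proof -
    have Vd: "\<And>c. (\<lambda>y. nab b' k y $ c) differentiable at x" using B_diff[OF x] .
    have "pd a' (\<lambda>y. gC g y (nab b' k y) (Y y)) x = 0"
    proof (rule pd_cong_zero[OF U_open x])
      fix y assume y: "y \<in> U"
      obtain \<beta> where "nab b' k y = \<beta> *s k y" using par_beta[OF par y] by blast
      then show "gC g y (nab b' k y) (Y y) = 0"
        using perp[OF y] gC_sym[OF y, of "k y" "Y y"] by (simp add: gC_smul)
    qed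
    then have e: "gC g x (nab a' (nab b' k) x) (Y x) + gC g x (nab b' k x) (nab a' Y x) = 0"
      using metric_L[OF x Vd Yd, of a'] by simp
    obtain \<beta>b where bb: "nab b' k x = \<beta>b *s k x" using par_beta[OF par x] by blast
    obtain \<beta>a where ba: "nab a' k x = \<beta>a *s k x" using par_beta[OF par x] by blast
    have "gC g x (nab b' k x) (nab a' Y x) = \<beta>b * gC g x (k x) (nab a' Y x)" unfolding bb gC_smul ..
    also have "\<dots> = - \<beta>b * gC g x (nab a' k x) (Y x)"
    proof -
      have "gC g x (k x) (nab a' Y x) = - gC g x (nab a' k x) (Y x)"
        using kY[of a'] by (simp add: eq_neg_iff_add_eq_0 add.commute)
      then show ?thesis by simp
    qed
    also have "\<dots> = - \<beta>b * \<beta>a * gC g x (k x) (Y x)" unfolding ba gC_smul by simp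
    also have "\<dots> = 0" using perp[OF x] gC_sym[OF x, of "k x" "Y x"] by simp
    finally show ?thesis using e Yx by simp
  qed
  have "(\<chi> c. \<Sum>d\<in>UNIV. of_real (Riem g x a b d c) * k x $ d) = nab a (nab b k) x - nab b (nab a k) x"
    using ricci[OF x kc_Ck] by (simp add: vec_eq_iff)
  then show ?thesis using one[of a b] one[of b a] by (simp add: gC_diffl)
qed

lemma part2:
  assumes par: "parallel_ns U g k" and x: "x \<in> U"
  shows "(\<Sum>c\<in>UNIV. k x $ c * PhiC g x c a) * lower g x (k x) b
       - (\<Sum>c\<in>UNIV. k x $ c * PhiC g x c b) * lower g x (k x) a = 0"
proof -
  obtain l0 where l0: "gC g x (k x) l0 = 1" using l0_ex[OF x] by blast
  define Rlr where "Rlr a b d c = (\<Sum>e\<in>UNIV. Riem g x a b d e * g x $ e $ c)" for a b d c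
  have as: "Rlr a b d c = - Rlr b a d c" for a b d c
    unfolding Rlr_def by (subst riem_as) (simp add: sum_negf)
  have S: "Rlr a b d c = - Rlr a b c d" for a b d c
    using riem_antisym[OF x, of a b d c] unfolding Rlr_def by (simp add: eq_neg_iff_add_eq_0)
  have Bi: "Rlr a b d c + Rlr b d a c + Rlr d a b c = 0" for a b d c
  proof -
    have "Rlr a b d c + Rlr b d a c + Rlr d a b c
       = (\<Sum>e\<in>UNIV. (Riem g x a b d e + Riem g x b d a e + Riem g x d a b e) * g x $ e $ c)"
      unfolding Rlr_def by (simp add: sum.distrib algebra_simps)
    then show ?thesis using bianchi[OF x] by simp
  qed
  have pairr: "Rlr a b c d = Rlr c d a b" for a b c d by (rule pair_real[OF as S Bi])
  define Rl where "Rl a b d c = complex_of_real (Rlr a b d c)" for a b d c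
  define R where "R a b d c = complex_of_real (Riem g x a b d c)" for a b d c
  define Gm where "Gm d c = complex_of_real (ginv g x $ d $ c)" for d c
  have pair: "Rl a b c d = Rl c d a b" for a b c d unfolding Rl_def using pairr[of a b c d] by simp
  have S': "Rl a b d c = - Rl a b c d" for a b d c unfolding Rl_def using S[of a b d c] by simp
  have Rdef: "R a b d c = (\<Sum>f\<in>UNIV. Rl a b d f * Gm f c)" for a b d c
  proof -
    have "(\<Sum>f\<in>UNIV. Rl a b d f * Gm f c) = of_real (\<Sum>e\<in>UNIV. Riem g x a b d e * (\<Sum>f\<in>UNIV. g x $ e $ f * ginv g x $ f $ c))"
      unfolding Rl_def Rlr_def Gm_def by (simp add: sum_3 algebra_simps)
    also have "\<dots> = of_real (\<Sum>e\<in>UNIV. Riem g x a b d e * (if e = c then 1 else 0))"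
      by (simp only: G_right[OF x])
    also have "\<dots> = R a b d c" unfolding R_def by (simp add: if_distrib cong: if_cong)
    finally show ?thesis by simp
  qed
  have kdef: "k x $ c = (\<Sum>d\<in>UNIV. Kv x d * Gm d c)" for c
    unfolding Gm_def using k_from_Kv[OF x] .
  have Gsym: "Gm a b = Gm b a" for a b unfolding Gm_def using G_sym[OF x] by simp
  have Kl: "(\<Sum>d\<in>UNIV. Kv x d * l0 $ d) = 1" using l0 unfolding gC_Kv .
  have A: "(\<Sum>c\<in>UNIV. (\<Sum>d\<in>UNIV. Rl a b d c * k x $ d) * Z c) = 0"
    if "(\<Sum>d\<in>UNIV. Kv x d * Z d) = 0" for a b Z
  proof -
    have "gC g x (k x) (vec_lambda Z) = 0" using that unfolding gC_Kv by simp
    from par_A[OF par x this, of a b]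
    have "gC g x (\<chi> c. \<Sum>d\<in>UNIV. of_real (Riem g x a b d c) * k x $ d) (vec_lambda Z) = 0" .
    moreover have "gC g x (\<chi> c. \<Sum>d\<in>UNIV. of_real (Riem g x a b d c) * k x $ d) (vec_lambda Z)
       = (\<Sum>c\<in>UNIV. (\<Sum>d\<in>UNIV. Rl a b d c * k x $ d) * Z c)"
      unfolding gC_def Rl_def Rlr_def by (simp add: sum_3 algebra_simps)
    ultimately show ?thesis by simp
  qed
  have main: "(\<Sum>c\<in>UNIV. k x $ c * (\<Sum>e\<in>UNIV. R c e a e)) * Kv x b = (\<Sum>c\<in>UNIV. k x $ c * (\<Sum>e\<in>UNIV. R c e b e)) * Kv x a"
    by (rule alg2[where Rl=Rl and Gm=Gm and k="\<lambda>c. k x $ c" and l="\<lambda>d. l0 $ d", OF Rdef pair S' kdef Gsym Kl A])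
  have low: "lower g x (k x) b' = Kv x b'" for b'
    unfolding lower_def Kv_def using g_sym[OF x] by (simp add: sum_3 algebra_simps)
  have ph: "(\<Sum>c\<in>UNIV. k x $ c * PhiC g x c a') = (\<Sum>c\<in>UNIV. k x $ c * (\<Sum>e\<in>UNIV. R c e a' e)) - of_real (scal g x) / 3 * Kv x a'" for a'
    unfolding PhiC_def Phi_def Ric_def R_def Kv_def by (simp add: sum_3 algebra_simps)
  show ?thesis unfolding low ph using main by (simp add: algebra_simps)
qed

end

theorem mainTheorem11:
  fixes U :: "(real^3) set" and g :: "real^3 \<Rightarrow> real^3^3" and k :: "real^3 \<Rightarrow> complex^3"
  assumes "pr_metric U g" and "null_generator U g k"
  shows "(co_geodetic U g k \<longrightarrow>
            (\<forall>x\<in>U. (\<Sum>a\<in>UNIV. \<Sum>b\<in>UNIV. k x $ a * k x $ b * PhiC g x a b) = 0))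
       \<and> (parallel_ns U g k \<longrightarrow>
            (\<forall>x\<in>U. \<forall>a b. (\<Sum>c\<in>UNIV. k x $ c * PhiC g x c a) * lower g x (k x) b
                         - (\<Sum>c\<in>UNIV. k x $ c * PhiC g x c b) * lower g x (k x) a = 0))"
proof -
  interpret G: geo2 U g k
    using assms by (simp add: geo2_def geo_def geo2_axioms_def)
  show ?thesis using G.part1 G.part2 by blast
qed

end
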